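(* Let $k$ be a field, $\Gamma=(V,E)$ a finite connected quiver and $I\subseteq R^2$ a two-sided ideal of $k\Gamma$ such that $k\Gamma/I$ is finite dimensional. Then $$\dim_k HH^1(k\Gamma/I)=\dim_k\mathfrak{F}_2(I)+\dim_k Z(k\Gamma/I)-|\mathscr{Q}_C|.$$
   Context: For a path $p$, $t(p),h(p)$ are its start and end vertex; paths multiply by left-to-right concatenation (product $0$ if they do not concatenate). $R$ is the ideal generated by $E$, $\overline{x}=x+I$. $HH^1(k\Gamma/I)$ is the space of derivations of the algebra $k\Gamma/I$ modulo inner derivations; $Z(k\Gamma/I)$ is its center. A differential operator from $k\Gamma$ to $k\Gamma/I$ is a $k$-linear map with $D(xy)=D(x)\overline{y}+\overline{x}D(y)$. $\mathscr{Q}$ is a fixed $k$-basis of $k\Gamma/I$ consisting of residue classes of paths and containing the classes of all vertices and arrows; for $\overline{s}\in\mathscr{Q}$, $t(\overline{s}),h(\overline{s})$ are the start/end vertex of any representing path (well defined). $\mathscr{Q}_C=\{\overline{q}\in\mathscr{Q}\mid t(\overline{q})=h(\overline{q})\}$. For $r\in E$ and $\overline{s}\in\mathscr{Q}$ with $t(r)=t(\overline{s})$, $h(r)=h(\overline{s})$, $D_{r,\overline{s}}$ is the unique differential operator $k\Gamma\to k\Gamma/I$ with $D_{r,\overline{s}}(r)=\overline{s}$ and vanishing on all other arrows and vertices; $\mathfrak{D}_2$ is the $k$-span of all such $D_{r,\overline{s}}$, and $\mathfrak{F}_2(I)=\{D\in\mathfrak{D}_2\mid D(I)=0\}$. *)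

theory Defs
  imports Complex_Main "HOL-Library.Function_Algebras"
begin

text \<open>A path is encoded as a pair (v, es): its start vertex v and its list of arrows es
  (the empty list gives the trivial path at v).\<close>

type_synonym ('v,'e) qpath = "'v \<times> 'e list"

definition valid_path :: "'v set \<Rightarrow> 'e set \<Rightarrow> ('e \<Rightarrow> 'v) \<Rightarrow> ('e \<Rightarrow> 'v) \<Rightarrow> ('v,'e) qpath \<Rightarrow> bool" where
  "valid_path V E t h p = (fst p \<in> V \<and> set (snd p) \<subseteq> E \<and>
     (snd p \<noteq> [] \<longrightarrow> t (hd (snd p)) = fst p) \<and>
     (\<forall>i. Suc i < length (snd p) \<longrightarrow> h (snd p ! i) = t (snd p ! Suc i)))"

definition path_end :: "('e \<Rightarrow> 'v) \<Rightarrow> ('v,'e) qpath \<Rightarrow> 'v" where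
  "path_end h p = (if snd p = [] then fst p else h (last (snd p)))"

definition finite_quiver :: "'v set \<Rightarrow> 'e set \<Rightarrow> ('e \<Rightarrow> 'v) \<Rightarrow> ('e \<Rightarrow> 'v) \<Rightarrow> bool" where
  "finite_quiver V E t h = (finite V \<and> finite E \<and> (\<forall>a\<in>E. t a \<in> V \<and> h a \<in> V))"

definition connected_quiver :: "'v set \<Rightarrow> 'e set \<Rightarrow> ('e \<Rightarrow> 'v) \<Rightarrow> ('e \<Rightarrow> 'v) \<Rightarrow> bool" where
  "connected_quiver V E t h =
    (\<forall>u\<in>V. \<forall>w\<in>V. (u, w) \<in> ({(t a, h a) | a. a \<in> E} \<union> {(h a, t a) | a. a \<in> E})\<^sup>*)"

definition path_alg :: "'v set \<Rightarrow> 'e set \<Rightarrow> ('e \<Rightarrow> 'v) \<Rightarrow> ('e \<Rightarrow> 'v) \<Rightarrow> (('v,'e) qpath \<Rightarrow> 'k::field) set" where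
  "path_alg V E t h = {x. finite {p. x p \<noteq> 0} \<and> (\<forall>p. x p \<noteq> 0 \<longrightarrow> valid_path V E t h p)}"

text \<open>Multiplication: left-to-right concatenation of paths, extended bilinearly.\<close>
definition pmul :: "('e \<Rightarrow> 'v) \<Rightarrow> (('v,'e) qpath \<Rightarrow> 'k::field) \<Rightarrow> (('v,'e) qpath \<Rightarrow> 'k) \<Rightarrow> (('v,'e) qpath \<Rightarrow> 'k)" where
  "pmul h x y = (\<lambda>(v, es). \<Sum>i\<in>{0..length es}.
      x (v, take i es) * y (path_end h (v, take i es), drop i es))"

definition pscale :: "'k::field \<Rightarrow> (('v,'e) qpath \<Rightarrow> 'k) \<Rightarrow> (('v,'e) qpath \<Rightarrow> 'k)" where
  "pscale c x = (\<lambda>p. c * x p)"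

definition pbasis :: "('v,'e) qpath \<Rightarrow> (('v,'e) qpath \<Rightarrow> 'k::field)" where
  "pbasis p = (\<lambda>q. if q = p then 1 else 0)"

definition vertex_el :: "'v \<Rightarrow> (('v,'e) qpath \<Rightarrow> 'k::field)" where
  "vertex_el v = pbasis (v, [])"

definition arrow_el :: "('e \<Rightarrow> 'v) \<Rightarrow> 'e \<Rightarrow> (('v,'e) qpath \<Rightarrow> 'k::field)" where
  "arrow_el t a = pbasis (t a, [a])"

definition is_ideal :: "'v set \<Rightarrow> 'e set \<Rightarrow> ('e \<Rightarrow> 'v) \<Rightarrow> ('e \<Rightarrow> 'v) \<Rightarrow> (('v,'e) qpath \<Rightarrow> 'k::field) set \<Rightarrow> bool" where
  "is_ideal V E t h J = (J \<subseteq> path_alg V E t h \<and> 0 \<in> J \<and>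
     (\<forall>x\<in>J. \<forall>y\<in>J. x + y \<in> J) \<and> (\<forall>c. \<forall>x\<in>J. pscale c x \<in> J) \<and>
     (\<forall>a\<in>path_alg V E t h. \<forall>x\<in>J. pmul h a x \<in> J \<and> pmul h x a \<in> J))"

definition ideal_gen :: "'v set \<Rightarrow> 'e set \<Rightarrow> ('e \<Rightarrow> 'v) \<Rightarrow> ('e \<Rightarrow> 'v) \<Rightarrow> (('v,'e) qpath \<Rightarrow> 'k::field) set \<Rightarrow> (('v,'e) qpath \<Rightarrow> 'k) set" where
  "ideal_gen V E t h S = \<Inter>{J. is_ideal V E t h J \<and> S \<subseteq> J}"

definition arrow_ideal :: "'v set \<Rightarrow> 'e set \<Rightarrow> ('e \<Rightarrow> 'v) \<Rightarrow> ('e \<Rightarrow> 'v) \<Rightarrow> (('v,'e) qpath \<Rightarrow> 'k::field) set" where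
  "arrow_ideal V E t h = ideal_gen V E t h {arrow_el t a | a. a \<in> E}"

definition arrow_ideal_sq :: "'v set \<Rightarrow> 'e set \<Rightarrow> ('e \<Rightarrow> 'v) \<Rightarrow> ('e \<Rightarrow> 'v) \<Rightarrow> (('v,'e) qpath \<Rightarrow> 'k::field) set" where
  "arrow_ideal_sq V E t h = ideal_gen V E t h
     {pmul h x y | x y. x \<in> arrow_ideal V E t h \<and> y \<in> arrow_ideal V E t h}"

text \<open>The quotient k Gamma / I is represented (up to isomorphism) by a type 'a with a ring
  structure and k-scalar multiplication sc, together with a surjective k-algebra
  homomorphism pi from k Gamma onto 'a whose kernel is exactly I. pi x is the residue
  class of x.\<close>

definition quotient_map ::
  "'v set \<Rightarrow> 'e set \<Rightarrow> ('e \<Rightarrow> 'v) \<Rightarrow> ('e \<Rightarrow> 'v) \<Rightarrow> (('v,'e) qpath \<Rightarrow> 'k::field) set \<Rightarrow>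
   ('k \<Rightarrow> 'a::ring \<Rightarrow> 'a) \<Rightarrow> ((('v,'e) qpath \<Rightarrow> 'k) \<Rightarrow> 'a) \<Rightarrow> bool" where
  "quotient_map V E t h I sc \<pi> =
    (Vector_Spaces.vector_space sc \<and>
     (\<forall>x\<in>path_alg V E t h. \<forall>y\<in>path_alg V E t h.
        \<pi> (x + y) = \<pi> x + \<pi> y \<and> \<pi> (pmul h x y) = \<pi> x * \<pi> y) \<and>
     (\<forall>c. \<forall>x\<in>path_alg V E t h. \<pi> (pscale c x) = sc c (\<pi> x)) \<and>
     \<pi> ` path_alg V E t h = UNIV \<and>
     {x \<in> path_alg V E t h. \<pi> x = 0} = I)"

definition derivations :: "('k::field \<Rightarrow> 'a::ring \<Rightarrow> 'a) \<Rightarrow> ('a \<Rightarrow> 'a) set" where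
  "derivations sc = {D. Vector_Spaces.linear sc sc D \<and> (\<forall>x y. D (x * y) = D x * y + x * D y)}"

definition inner_derivations :: "('a::ring \<Rightarrow> 'a) set" where
  "inner_derivations = {(\<lambda>x. a * x - x * a) | a. True}"

definition fun_scale :: "('k \<Rightarrow> 'a \<Rightarrow> 'a) \<Rightarrow> 'k \<Rightarrow> ('b \<Rightarrow> 'a) \<Rightarrow> ('b \<Rightarrow> 'a)" where
  "fun_scale sc c f = (\<lambda>x. sc c (f x))"

text \<open>dim_k HH^1(A) = dim_k Der(A) - dim_k Inn(A) (dimension of the quotient space;
  both are finite-dimensional when A is). Stated as an integer.\<close>
definition dim_HH1 :: "('k::field \<Rightarrow> 'a::ring \<Rightarrow> 'a) \<Rightarrow> int" where
  "dim_HH1 sc = int (vector_space.dim (fun_scale sc) (derivations sc))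
               - int (vector_space.dim (fun_scale sc) (inner_derivations :: ('a \<Rightarrow> 'a) set))"

definition centre :: "'a::ring set" where
  "centre = {z. \<forall>x. z * x = x * z}"

definition cls_src :: "'v set \<Rightarrow> 'e set \<Rightarrow> ('e \<Rightarrow> 'v) \<Rightarrow> ('e \<Rightarrow> 'v) \<Rightarrow>
    ((('v,'e) qpath \<Rightarrow> 'k::field) \<Rightarrow> 'a) \<Rightarrow> 'a \<Rightarrow> 'v" where
  "cls_src V E t h \<pi> q = fst (SOME p. valid_path V E t h p \<and> \<pi> (pbasis p) = q)"

definition cls_tgt :: "'v set \<Rightarrow> 'e set \<Rightarrow> ('e \<Rightarrow> 'v) \<Rightarrow> ('e \<Rightarrow> 'v) \<Rightarrow>
    ((('v,'e) qpath \<Rightarrow> 'k::field) \<Rightarrow> 'a) \<Rightarrow> 'a \<Rightarrow> 'v" where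
  "cls_tgt V E t h \<pi> q = path_end h (SOME p. valid_path V E t h p \<and> \<pi> (pbasis p) = q)"

definition path_basis :: "'v set \<Rightarrow> 'e set \<Rightarrow> ('e \<Rightarrow> 'v) \<Rightarrow> ('e \<Rightarrow> 'v) \<Rightarrow>
    ('k::field \<Rightarrow> 'a::ring \<Rightarrow> 'a) \<Rightarrow> ((('v,'e) qpath \<Rightarrow> 'k) \<Rightarrow> 'a) \<Rightarrow> 'a set \<Rightarrow> bool" where
  "path_basis V E t h sc \<pi> Q =
    (\<not> module.dependent sc Q \<and> module.span sc Q = UNIV \<and>
     (\<forall>q\<in>Q. \<exists>p. valid_path V E t h p \<and> q = \<pi> (pbasis p)) \<and>
     (\<forall>v\<in>V. \<pi> (vertex_el v) \<in> Q) \<and> (\<forall>a\<in>E. \<pi> (arrow_el t a) \<in> Q))"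

definition Q_C :: "'v set \<Rightarrow> 'e set \<Rightarrow> ('e \<Rightarrow> 'v) \<Rightarrow> ('e \<Rightarrow> 'v) \<Rightarrow>
    ((('v,'e) qpath \<Rightarrow> 'k::field) \<Rightarrow> 'a) \<Rightarrow> 'a set \<Rightarrow> 'a set" where
  "Q_C V E t h \<pi> Q = {q \<in> Q. cls_src V E t h \<pi> q = cls_tgt V E t h \<pi> q}"

text \<open>Differential operators k Gamma \<rightarrow> k Gamma / I (as functions that vanish outside
  k Gamma, so that they are determined by their values on k Gamma).\<close>
definition diff_op :: "'v set \<Rightarrow> 'e set \<Rightarrow> ('e \<Rightarrow> 'v) \<Rightarrow> ('e \<Rightarrow> 'v) \<Rightarrow>
    ('k::field \<Rightarrow> 'a::ring \<Rightarrow> 'a) \<Rightarrow> ((('v,'e) qpath \<Rightarrow> 'k) \<Rightarrow> 'a) \<Rightarrow> ((('v,'e) qpath \<Rightarrow> 'k) \<Rightarrow> 'a) \<Rightarrow> bool" where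
  "diff_op V E t h sc \<pi> D =
    ((\<forall>x. x \<notin> path_alg V E t h \<longrightarrow> D x = 0) \<and>
     (\<forall>x\<in>path_alg V E t h. \<forall>y\<in>path_alg V E t h.
        D (x + y) = D x + D y \<and> D (pmul h x y) = D x * \<pi> y + \<pi> x * D y) \<and>
     (\<forall>c. \<forall>x\<in>path_alg V E t h. D (pscale c x) = sc c (D x)))"

definition D_op :: "'v set \<Rightarrow> 'e set \<Rightarrow> ('e \<Rightarrow> 'v) \<Rightarrow> ('e \<Rightarrow> 'v) \<Rightarrow>
    ('k::field \<Rightarrow> 'a::ring \<Rightarrow> 'a) \<Rightarrow> ((('v,'e) qpath \<Rightarrow> 'k) \<Rightarrow> 'a) \<Rightarrow> 'e \<Rightarrow> 'a \<Rightarrow> ((('v,'e) qpath \<Rightarrow> 'k) \<Rightarrow> 'a)" where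
  "D_op V E t h sc \<pi> r s = (THE D. diff_op V E t h sc \<pi> D \<and> D (arrow_el t r) = s \<and>
      (\<forall>a\<in>E. a \<noteq> r \<longrightarrow> D (arrow_el t a) = 0) \<and> (\<forall>v\<in>V. D (vertex_el v) = 0))"

definition frakD2 :: "'v set \<Rightarrow> 'e set \<Rightarrow> ('e \<Rightarrow> 'v) \<Rightarrow> ('e \<Rightarrow> 'v) \<Rightarrow>
    ('k::field \<Rightarrow> 'a::ring \<Rightarrow> 'a) \<Rightarrow> ((('v,'e) qpath \<Rightarrow> 'k) \<Rightarrow> 'a) \<Rightarrow> 'a set \<Rightarrow> ((('v,'e) qpath \<Rightarrow> 'k) \<Rightarrow> 'a) set" where
  "frakD2 V E t h sc \<pi> Q = module.span (fun_scale sc)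
     {D_op V E t h sc \<pi> r s | r s. r \<in> E \<and> s \<in> Q \<and>
        t r = cls_src V E t h \<pi> s \<and> h r = cls_tgt V E t h \<pi> s}"

definition frakF2 :: "'v set \<Rightarrow> 'e set \<Rightarrow> ('e \<Rightarrow> 'v) \<Rightarrow> ('e \<Rightarrow> 'v) \<Rightarrow>
    ('k::field \<Rightarrow> 'a::ring \<Rightarrow> 'a) \<Rightarrow> ((('v,'e) qpath \<Rightarrow> 'k) \<Rightarrow> 'a) \<Rightarrow> 'a set \<Rightarrow>
    (('v,'e) qpath \<Rightarrow> 'k) set \<Rightarrow> ((('v,'e) qpath \<Rightarrow> 'k) \<Rightarrow> 'a) set" where
  "frakF2 V E t h sc \<pi> Q I = {D \<in> frakD2 V E t h sc \<pi> Q. \<forall>x\<in>I. D x = 0}"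

end

theory Submission
  imports Defs
begin


lemma rank_nullity:
  assumes lin: "Vector_Spaces.linear s1 s2 f"
    and S: "module.subspace s1 S" and B: "finite B" "S \<subseteq> module.span s1 B"
  shows "vector_space.dim s1 S = vector_space.dim s2 (f ` S) + vector_space.dim s1 {x\<in>S. f x = 0}"
proof -
  interpret Vector_Spaces.linear s1 s2 f by (rule lin)
  let ?K = "{x\<in>S. f x = 0}"
  obtain BK where BK: "BK \<subseteq> ?K" "vs1.independent BK" "?K \<subseteq> vs1.span BK" "card BK = vs1.dim ?K"
    using vs1.basis_exists by blast
  obtain B' where B': "BK \<subseteq> B'" "B' \<subseteq> S" "vs1.independent B'" "S \<subseteq> vs1.span B'"
    using vs1.maximal_independent_subset_extend[of BK S] BK by blast
  have fB': "finite B'" using vs1.independent_span_bound[OF B(1) B'(3)] B'(2) B(2) by blast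
  have dS: "vs1.dim S = card B'" using vs1.basis_card_eq_dim[OF B'(2) B'(4) B'(3)] by simp
  let ?C = "B' - BK"
  have cardB': "card B' = card BK + card ?C"
    using fB' B'(1) by (metis card_Diff_subset card_mono finite_subset le_add_diff_inverse)
  have injspan: "inj_on f (vs1.span ?C)"
    unfolding inj_on_iff_eq_0[OF vs1.subspace_span]
  proof (intro ballI impI)
    fix x assume x: "x \<in> vs1.span ?C" and fx: "f x = 0"
    have xS: "x \<in> S" using x B'(2) S vs1.span_mono[of ?C S] vs1.span_eq_iff by blast
    then have "x \<in> vs1.span BK" using BK(3) fx by blast
    moreover have "x \<in> vs1.span BK \<Longrightarrow> x = 0"
    proof -
      assume xb: "x \<in> vs1.span BK"
      have r1: "vs1.representation B' x = vs1.representation BK x"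
        by (rule vs1.representation_extend[OF B'(3) xb B'(1)])
      have r2: "vs1.representation B' x = vs1.representation ?C x"
        by (rule vs1.representation_extend[OF B'(3) x]) auto
      have "\<forall>b. vs1.representation B' x b = 0"
        using r1 r2 vs1.representation_ne_zero by (metis DiffD2)
      hence "vs1.representation B' x = (\<lambda>b. 0)" by auto
      moreover have "x \<in> vs1.span B'" using x vs1.span_mono[of ?C B'] by blast
      ultimately show "x = 0" using vs1.sum_nonzero_representation_eq[OF B'(3)] by force
    qed
    ultimately show "x = 0" by blast
  qed
  have indC: "vs2.independent (f ` ?C)"
    by (rule independent_injective_image) (use B'(3) injspan vs1.independent_mono in auto)
  have injC: "inj_on f ?C" using injspan vs1.span_superset inj_on_subset by blast
  have sp: "f ` S \<subseteq> vs2.span (f ` ?C)"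
  proof -
    have "f ` S \<subseteq> vs2.span (f ` B')" using B'(4) by (rule spans_image)
    also have "f ` B' \<subseteq> insert 0 (f ` ?C)" using BK(1) by auto
    hence "vs2.span (f ` B') \<subseteq> vs2.span (f ` ?C)"
      by (metis vs2.span_insert_0 vs2.span_mono)
    finally show ?thesis .
  qed
  have "card (f ` ?C) = vs2.dim (f ` S)"
    by (rule vs2.basis_card_eq_dim) (use B'(2) sp indC in auto)
  then have "vs2.dim (f ` S) = card ?C" using card_image[OF injC] by simp
  then show ?thesis using dS cardB' BK(4) by simp
qed


lemma sum_fun_app: "(sum f S) x = (\<Sum>i\<in>S. f i x)"
  by (induction S rule: infinite_finite_induct) auto

lemma valid_Nil[simp]: "valid_path V E t h (v, []) \<longleftrightarrow> v \<in> V"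
  by (simp add: valid_path_def)

lemma valid_Cons:
  assumes "\<forall>a\<in>E. h a \<in> V"
  shows "valid_path V E t h (v, a#es) \<longleftrightarrow> v \<in> V \<and> a \<in> E \<and> t a = v \<and> valid_path V E t h (h a, es)"
proof -
  have "(\<forall>i. Suc i < length (a#es) \<longrightarrow> h ((a#es) ! i) = t ((a#es) ! Suc i)) \<longleftrightarrow>
        (es \<noteq> [] \<longrightarrow> h a = t (hd es)) \<and> (\<forall>i. Suc i < length es \<longrightarrow> h (es ! i) = t (es ! Suc i))"
    (is "?L \<longleftrightarrow> ?R")
  proof
    assume L: ?L
    show ?R
    proof
      show "es \<noteq> [] \<longrightarrow> h a = t (hd es)" using L[rule_format, of 0] by (cases es) auto
      show "\<forall>i. Suc i < length es \<longrightarrow> h (es ! i) = t (es ! Suc i)" using L[rule_format, of "Suc _"] by auto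
    qed
  next
    assume R: ?R
    show ?L
    proof (intro allI impI)
      fix i assume "Suc i < length (a#es)"
      then show "h ((a#es) ! i) = t ((a#es) ! Suc i)" using R by (cases i) (auto simp: hd_conv_nth)
    qed
  qed
  then show ?thesis using assms by (auto simp: valid_path_def)
qed

lemma path_end_Nil[simp]: "path_end h (v, []) = v" by (simp add: path_end_def)
lemma path_end_Cons[simp]: "path_end h (v, a#es) = path_end h (h a, es)"
  by (simp add: path_end_def)

lemma valid_fst: "valid_path V E t h p \<Longrightarrow> fst p \<in> V"
  by (simp add: valid_path_def)

lemma valid_end:
  assumes "\<forall>a\<in>E. h a \<in> V" "valid_path V E t h (v, es)"
  shows "path_end h (v, es) \<in> V"
  using assms(2)
proof (induction es arbitrary: v)
  case Nil then show ?case by simp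
next
  case (Cons a es) then show ?case using valid_Cons[OF assms(1)] by auto
qed

lemma valid_concat:
  assumes "\<forall>a\<in>E. h a \<in> V" "valid_path V E t h (v, es1)" "valid_path V E t h (w, es2)"
    "path_end h (v, es1) = w"
  shows "valid_path V E t h (v, es1 @ es2) \<and> path_end h (v, es1 @ es2) = path_end h (w, es2)"
  using assms(2,4)
proof (induction es1 arbitrary: v)
  case Nil then show ?case using assms(3) by simp
next
  case (Cons a es) then show ?case using valid_Cons[OF assms(1)] by auto
qed

lemma valid_split:
  assumes "\<forall>a\<in>E. h a \<in> V" "valid_path V E t h (v, es1 @ es2)"
  shows "valid_path V E t h (v, es1) \<and> valid_path V E t h (path_end h (v, es1), es2)"
  using assms(2)
proof (induction es1 arbitrary: v)
  case Nil then show ?case by (simp add: valid_path_def)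
next
  case (Cons a es) then show ?case using valid_Cons[OF assms(1)] by auto
qed

lemma sum_delta_cond: "finite A \<Longrightarrow> (\<Sum>i\<in>A. if i = n \<and> C then 1 else (0::'k::field)) = (if n \<in> A \<and> C then 1 else 0)"
  by (cases C) simp_all

lemma pmul_pbasis:
  "pmul h (pbasis p) (pbasis q) =
     (if path_end h p = fst q then pbasis (fst p, snd p @ snd q) else (0::('v,'e) qpath \<Rightarrow> 'k::field))"
proof (rule ext)
  fix r :: "('v,'e) qpath"
  obtain v es where r: "r = (v, es)" by fastforce
  obtain pv pes where p: "p = (pv, pes)" by fastforce
  obtain qv qes where q: "q = (qv, qes)" by fastforce
  let ?n = "length pes"
  have "pmul h (pbasis p) (pbasis q) r =
     (\<Sum>i\<in>{0..length es}. (if i = ?n \<and> (v = pv \<and> take ?n es = pes \<and> path_end h (v, pes) = qv \<and> drop ?n es = qes) then 1 else (0::'k)))"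
    unfolding pmul_def r pbasis_def p q
    apply (simp only: prod.case)
    by (rule sum.cong) auto
  also have "\<dots> = (if ?n \<in> {0..length es} \<and> (v = pv \<and> take ?n es = pes \<and> path_end h (v, pes) = qv \<and> drop ?n es = qes) then 1 else 0)"
    by (rule sum_delta_cond) simp
  also have "\<dots> = (if path_end h p = fst q then pbasis (fst p, snd p @ snd q) else 0) r"
    unfolding r p q pbasis_def
    by (auto simp: append_eq_conv_conj) (metis append_take_drop_id)
  finally show "pmul h (pbasis p) (pbasis q) r = (if path_end h p = fst q then pbasis (fst p, snd p @ snd q) else (0::('v,'e) qpath \<Rightarrow> 'k)) r" .
qed

lemma pmul_add_left: "pmul h (x + y) z = pmul h x z + pmul h y z"
  by (auto simp: pmul_def fun_eq_iff distrib_right sum.distrib)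
lemma pmul_add_right: "pmul h x (y + z) = pmul h x y + pmul h x z"
  by (auto simp: pmul_def fun_eq_iff distrib_left sum.distrib)
lemma pmul_zero_left[simp]: "pmul h 0 z = 0"
  by (auto simp: pmul_def fun_eq_iff)
lemma pmul_zero_right[simp]: "pmul h z 0 = 0"
  by (auto simp: pmul_def fun_eq_iff)
lemma pmul_scale_left: "pmul h (pscale c x) y = pscale c (pmul h x y)"
  by (auto simp: pmul_def pscale_def fun_eq_iff sum_distrib_left mult.assoc)
lemma pmul_scale_right: "pmul h x (pscale c y) = pscale c (pmul h x y)"
  by (auto simp: pmul_def pscale_def fun_eq_iff sum_distrib_left mult.left_commute)
lemma pmul_sum_left: "pmul h (sum f S) y = (\<Sum>i\<in>S. pmul h (f i) y)"
proof (induction S rule: infinite_finite_induct)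
  case (insert x F) then show ?case by (simp only: sum.insert[OF insert(1,2)] pmul_add_left insert(3))
next
  case (infinite A) then show ?case by (metis sum.infinite pmul_zero_left)
qed (simp only: sum.empty pmul_zero_left)
lemma pmul_sum_right: "pmul h y (sum f S) = (\<Sum>i\<in>S. pmul h y (f i))"
proof (induction S rule: infinite_finite_induct)
  case (insert x F) then show ?case by (simp only: sum.insert[OF insert(1,2)] pmul_add_right insert(3))
next
  case (infinite A) then show ?case by (metis sum.infinite pmul_zero_right)
qed (simp only: sum.empty pmul_zero_right)

lemma pa_zero[simp]: "0 \<in> path_alg V E t h"
  by (simp add: path_alg_def)

lemma pa_add: "x \<in> path_alg V E t h \<Longrightarrow> y \<in> path_alg V E t h \<Longrightarrow> x + y \<in> path_alg V E t h"
proof -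
  assume x: "x \<in> path_alg V E t h" and y: "y \<in> path_alg V E t h"
  have "{p. (x + y) p \<noteq> 0} \<subseteq> {p. x p \<noteq> 0} \<union> {p. y p \<noteq> 0}" by auto
  then show ?thesis using x y unfolding path_alg_def by (auto intro: finite_subset)
qed

lemma pa_scale: "x \<in> path_alg V E t h \<Longrightarrow> pscale c x \<in> path_alg V E t h"
proof -
  assume x: "x \<in> path_alg V E t h"
  have "{p. pscale c x p \<noteq> 0} \<subseteq> {p. x p \<noteq> 0}" by (auto simp: pscale_def)
  then show ?thesis using x unfolding path_alg_def by (auto intro: finite_subset simp: pscale_def)
qed

lemma pscale_minus: "pscale (-1) x = - x"
  by (auto simp: pscale_def fun_eq_iff)

lemma pa_uminus: "x \<in> path_alg V E t h \<Longrightarrow> - x \<in> path_alg V E t h"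
  using pa_scale[of x V E t h "-1"] by (simp add: pscale_minus)

lemma pa_diff: "x \<in> path_alg V E t h \<Longrightarrow> y \<in> path_alg V E t h \<Longrightarrow> x - y \<in> path_alg V E t h"
  using pa_add[of x V E t h "-y"] pa_uminus[of y] by simp

lemma pa_sum: "(\<And>i. i \<in> S \<Longrightarrow> f i \<in> path_alg V E t h) \<Longrightarrow> sum f S \<in> path_alg V E t h"
  by (induction S rule: infinite_finite_induct) (auto intro: pa_add)

lemma pa_basis: "valid_path V E t h p \<Longrightarrow> pbasis p \<in> path_alg V E t h"
  by (auto simp: path_alg_def pbasis_def)

lemma pa_finite: "x \<in> path_alg V E t h \<Longrightarrow> finite {p. x p \<noteq> 0}"
  by (simp add: path_alg_def)

lemma pa_valid: "x \<in> path_alg V E t h \<Longrightarrow> x p \<noteq> 0 \<Longrightarrow> valid_path V E t h p"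
  unfolding path_alg_def by blast

lemma pa_expand:
  assumes "x \<in> path_alg V E t h"
  shows "x = (\<Sum>p\<in>{p. x p \<noteq> 0}. pscale (x p) (pbasis p))"
proof (rule ext)
  fix q
  have fin: "finite {p. x p \<noteq> 0}" using assms by (simp add: path_alg_def)
  have "(\<Sum>p\<in>{p. x p \<noteq> 0}. pscale (x p) (pbasis p)) q = (\<Sum>p\<in>{p. x p \<noteq> 0}. if p = q then x p else 0)"
    unfolding sum_fun_app by (rule sum.cong) (auto simp: pscale_def pbasis_def)
  also have "\<dots> = x q" using fin by (simp add: sum.delta)
  finally show "x q = (\<Sum>p\<in>{p. x p \<noteq> 0}. pscale (x p) (pbasis p)) q" by simp
qed

lemma pa_expand_superset:
  assumes "x \<in> path_alg V E t h" "finite S" "{p. x p \<noteq> 0} \<subseteq> S"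
  shows "x = (\<Sum>p\<in>S. pscale (x p) (pbasis p))"
proof -
  have "(\<Sum>p\<in>S. pscale (x p) (pbasis p)) = (\<Sum>p\<in>{p. x p \<noteq> 0}. pscale (x p) (pbasis p))"
    by (rule sum.mono_neutral_right[OF assms(2,3)]) (auto simp: pscale_def fun_eq_iff)
  then show ?thesis using pa_expand[OF assms(1)] by simp
qed

lemma pmul_expand:
  assumes "x \<in> path_alg V E t h" "y \<in> path_alg V E t h"
  shows "pmul h x y = (\<Sum>p\<in>{p. x p \<noteq> 0}. \<Sum>q\<in>{q. y q \<noteq> 0}.
            pscale (x p * y q) (pmul h (pbasis p) (pbasis q)))"
proof -
  have "pmul h x y = pmul h (\<Sum>p\<in>{p. x p \<noteq> 0}. pscale (x p) (pbasis p)) (\<Sum>q\<in>{q. y q \<noteq> 0}. pscale (y q) (pbasis q))"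
    using pa_expand[OF assms(1)] pa_expand[OF assms(2)] by simp
  also have "\<dots> = (\<Sum>p\<in>{p. x p \<noteq> 0}. \<Sum>q\<in>{q. y q \<noteq> 0}. pscale (x p * y q) (pmul h (pbasis p) (pbasis q)))"
    unfolding pmul_sum_left
    by (rule sum.cong[OF refl], unfold pmul_sum_right, rule sum.cong[OF refl])
       (simp only: pmul_scale_left pmul_scale_right, simp add: pscale_def mult.assoc fun_eq_iff)
  finally show ?thesis .
qed

lemma pa_pmul_basis:
  assumes "\<forall>a\<in>E. h a \<in> V" "valid_path V E t h p" "valid_path V E t h q"
  shows "pmul h (pbasis p) (pbasis q) \<in> path_alg V E t h"
proof (cases "path_end h p = fst q")
  case True
  obtain v es where p: "p = (v, es)" by fastforce
  obtain w fs where q: "q = (w, fs)" by fastforce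
  have v1: "valid_path V E t h (v, es)" and v2: "valid_path V E t h (w, fs)" and e: "path_end h (v, es) = w"
    using assms True p q by auto
  have "valid_path V E t h (v, es @ fs)" using valid_concat[OF assms(1) v1 v2 e] by auto
  then show ?thesis using True p q by (simp add: pmul_pbasis pa_basis)
qed (simp add: pmul_pbasis)

lemma pa_pmul:
  assumes "\<forall>a\<in>E. h a \<in> V" "x \<in> path_alg V E t h" "y \<in> path_alg V E t h"
  shows "pmul h x y \<in> path_alg V E t h"
  unfolding pmul_expand[OF assms(2,3)]
  by (intro pa_sum pa_scale pa_pmul_basis assms(1)) (auto intro: pa_valid[OF assms(2)] pa_valid[OF assms(3)])


lemma vs_fun_scale: "vector_space s \<Longrightarrow> vector_space (fun_scale s)"
  unfolding vector_space_def fun_scale_def by (auto simp: fun_eq_iff)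

locale setting =
  fixes V :: "'v set" and E :: "'e set" and t h :: "'e \<Rightarrow> 'v"
    and I :: "(('v,'e) qpath \<Rightarrow> 'k::field) set"
    and sc :: "'k \<Rightarrow> 'a::ring \<Rightarrow> 'a" and \<pi> :: "(('v,'e) qpath \<Rightarrow> 'k) \<Rightarrow> 'a"
    and Q :: "'a set"
  assumes fq: "finite_quiver V E t h"
    and idl: "is_ideal V E t h I"
    and qm: "quotient_map V E t h I sc \<pi>"
    and fd: "\<exists>B. finite B \<and> module.span sc B = UNIV"
    and pb: "path_basis V E t h sc \<pi> Q"
begin

abbreviation "P \<equiv> path_alg V E t h"
abbreviation "valid \<equiv> valid_path V E t h"
definition "b p = \<pi> (pbasis p)"
definition "e v = \<pi> (vertex_el v)"

lemma vs: "vector_space sc" using qm by (simp add: quotient_map_def)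

sublocale vs: vector_space sc by (rule vs)

lemma hV: "\<forall>a\<in>E. h a \<in> V" and tV: "\<forall>a\<in>E. t a \<in> V" and finV: "finite V" and finE: "finite E"
  using fq by (auto simp: finite_quiver_def)

lemma pi_add: "x \<in> P \<Longrightarrow> y \<in> P \<Longrightarrow> \<pi> (x + y) = \<pi> x + \<pi> y"
  using qm by (simp add: quotient_map_def)
lemma pi_mul: "x \<in> P \<Longrightarrow> y \<in> P \<Longrightarrow> \<pi> (pmul h x y) = \<pi> x * \<pi> y"
  using qm by (simp add: quotient_map_def)
lemma pi_scale: "x \<in> P \<Longrightarrow> \<pi> (pscale c x) = sc c (\<pi> x)"
  using qm by (simp add: quotient_map_def)
lemma pi_surj: "\<exists>x\<in>P. \<pi> x = y"
proof -
  have "\<pi> ` P = UNIV" using qm by (simp add: quotient_map_def)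
  then have "y \<in> \<pi> ` P" by simp
  then show ?thesis by blast
qed
lemma ker: "{x \<in> P. \<pi> x = 0} = I"
  using qm by (simp add: quotient_map_def)
lemma pi_zero[simp]: "\<pi> 0 = 0"
  using pi_add[of 0 0] by simp

lemma pi_sum: "(\<And>i. i \<in> S \<Longrightarrow> f i \<in> P) \<Longrightarrow> \<pi> (sum f S) = (\<Sum>i\<in>S. \<pi> (f i))"
proof (induction S rule: infinite_finite_induct)
  case (insert x F)
  have ih: "\<pi> (sum f F) = (\<Sum>i\<in>F. \<pi> (f i))" by (rule insert(3)) (rule insert(4), simp)
  have "\<pi> (sum f (insert x F)) = \<pi> (f x + sum f F)" by (simp only: sum.insert[OF insert(1,2)])
  also have "\<dots> = \<pi> (f x) + \<pi> (sum f F)" using insert(4) by (intro pi_add) (auto intro: pa_sum)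
  also have "\<dots> = \<pi> (f x) + (\<Sum>i\<in>F. \<pi> (f i))" by (simp only: ih)
  also have "\<dots> = (\<Sum>i\<in>insert x F. \<pi> (f i))" by (simp only: sum.insert[OF insert(1,2)])
  finally show ?case .
qed auto

lemma pi_expand: "x \<in> P \<Longrightarrow> \<pi> x = (\<Sum>p\<in>{p. x p \<noteq> 0}. sc (x p) (b p))"
  apply (subst pa_expand, assumption)
  apply (subst pi_sum)
   apply (auto intro!: pa_scale pa_basis pa_valid simp: pi_scale b_def pa_basis pa_valid)
  done

lemma sc_mult_left: "sc c (x * y) = sc c x * y"
proof -
  obtain X Y where X: "X \<in> P" "\<pi> X = x" and Y: "Y \<in> P" "\<pi> Y = y" using pi_surj by metis
  have "sc c (x * y) = \<pi> (pscale c (pmul h X Y))" using X Y by (simp add: pi_scale pi_mul pa_pmul hV)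
  also have "\<dots> = \<pi> (pmul h (pscale c X) Y)" by (simp add: pmul_scale_left)
  also have "\<dots> = sc c x * y" using X Y by (simp add: pi_scale pi_mul pa_scale)
  finally show ?thesis .
qed

lemma sc_mult_right: "sc c (x * y) = x * sc c y"
proof -
  obtain X Y where X: "X \<in> P" "\<pi> X = x" and Y: "Y \<in> P" "\<pi> Y = y" using pi_surj by metis
  have "sc c (x * y) = \<pi> (pscale c (pmul h X Y))" using X Y by (simp add: pi_scale pi_mul pa_pmul hV)
  also have "\<dots> = \<pi> (pmul h X (pscale c Y))" by (simp add: pmul_scale_right)
  also have "\<dots> = x * sc c y" using X Y by (simp add: pi_scale pi_mul pa_scale)
  finally show ?thesis .
qed

lemma b_mul: "valid p \<Longrightarrow> valid q \<Longrightarrow>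
   b p * b q = (if path_end h p = fst q then b (fst p, snd p @ snd q) else 0)"
  unfolding b_def by (simp add: pi_mul[symmetric] pa_basis pmul_pbasis)

lemma e_b: "e v = b (v, [])" by (simp add: e_def b_def vertex_el_def)

lemma e_left: "valid p \<Longrightarrow> v \<in> V \<Longrightarrow> e v * b p = (if v = fst p then b p else 0)"
  unfolding e_b by (subst b_mul) auto

lemma e_right: "valid p \<Longrightarrow> v \<in> V \<Longrightarrow> b p * e v = (if path_end h p = v then b p else 0)"
  unfolding e_b by (subst b_mul) auto

lemma e_e: "v \<in> V \<Longrightarrow> w \<in> V \<Longrightarrow> e v * e w = (if v = w then e v else 0)"
  using e_left[of "(w, [])" v] by (simp add: e_b)

definition "one = (\<Sum>v\<in>V. e v)"

lemma b_one: "valid p \<Longrightarrow> b p * one = b p"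
proof -
  assume p: "valid p"
  obtain v es where pv: "p = (v, es)" by fastforce
  have endV: "path_end h p \<in> V" using valid_end[OF hV] p pv by auto
  have "b p * one = (\<Sum>w\<in>V. if path_end h p = w then b p else 0)"
    unfolding one_def sum_distrib_left using e_right[OF p] by (intro sum.cong) auto
  also have "\<dots> = b p" using finV endV by simp
  finally show ?thesis .
qed

lemma one_b: "valid p \<Longrightarrow> one * b p = b p"
proof -
  assume p: "valid p"
  have fV: "fst p \<in> V" using valid_fst[OF p] .
  have "one * b p = (\<Sum>w\<in>V. if w = fst p then b p else 0)"
    unfolding one_def sum_distrib_right using e_left[OF p] by (intro sum.cong) auto
  also have "\<dots> = b p" using finV fV by simp
  finally show ?thesis .
qed

lemma span_b: "\<exists>X\<in>P. x = (\<Sum>p\<in>{p. X p \<noteq> 0}. sc (X p) (b p)) \<and> (\<forall>p. X p \<noteq> 0 \<longrightarrow> valid p)"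
proof -
  obtain X where "X \<in> P" "\<pi> X = x" using pi_surj by blast
  then show ?thesis using pi_expand[of X] pa_valid[of X] by blast
qed

lemma mul_one[simp]: "x * one = x"
proof -
  obtain X where X: "X \<in> P" "x = (\<Sum>p\<in>{p. X p \<noteq> 0}. sc (X p) (b p))" "\<forall>p. X p \<noteq> 0 \<longrightarrow> valid p"
    using span_b by blast
  show ?thesis unfolding X(2) sum_distrib_right
    by (rule sum.cong) (auto simp: sc_mult_left[symmetric] b_one X(3))
qed

lemma one_mul[simp]: "one * x = x"
proof -
  obtain X where X: "X \<in> P" "x = (\<Sum>p\<in>{p. X p \<noteq> 0}. sc (X p) (b p))" "\<forall>p. X p \<noteq> 0 \<longrightarrow> valid p"
    using span_b by blast
  show ?thesis unfolding X(2) sum_distrib_left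
    by (rule sum.cong) (auto simp: sc_mult_right[symmetric] one_b X(3))
qed

lemma Q_indep: "vs.independent Q" and Q_span: "vs.span Q = UNIV"
  and Q_b: "\<And>q. q \<in> Q \<Longrightarrow> \<exists>p. valid p \<and> q = b p"
  and Q_e: "\<And>v. v \<in> V \<Longrightarrow> e v \<in> Q"
  and Q_arr: "\<And>a. a \<in> E \<Longrightarrow> \<pi> (arrow_el t a) \<in> Q"
  using pb by (auto simp: path_basis_def b_def e_def)

lemma Q_finite: "finite Q"
  using fd vs.independent_span_bound[OF _ Q_indep] by blast

lemma Q_nz: "q \<in> Q \<Longrightarrow> q \<noteq> 0"
  using Q_indep vs.dependent_zero by blast

lemma b_ends:
  assumes p: "valid p" and p': "valid p'" and eq: "b p = b p'" and nz: "b p \<noteq> 0"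
  shows "fst p = fst p' \<and> path_end h p = path_end h p'"
proof
  have "e (fst p) * b p' = b p'" using e_left[OF p' valid_fst[OF p]] eq e_left[OF p valid_fst[OF p]] by simp
  then show "fst p = fst p'" using e_left[OF p' valid_fst[OF p]] nz eq by (auto split: if_splits)
next
  obtain v es where pv: "p = (v, es)" by fastforce
  obtain v' es' where pv': "p' = (v', es')" by fastforce
  have eV: "path_end h p \<in> V" using valid_end[OF hV] p pv by auto
  have "b p' * e (path_end h p) = b p'" using e_right[OF p eV] e_right[OF p' eV] eq by simp
  then show "path_end h p = path_end h p'" using e_right[OF p' eV] nz eq by (auto split: if_splits)
qed

definition "src q = cls_src V E t h \<pi> q"
definition "tgt q = cls_tgt V E t h \<pi> q"

lemma src_tgt:
  assumes "valid p" "b p = q" "q \<noteq> 0"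
  shows "src q = fst p" "tgt q = path_end h p"
proof -
  let ?p = "SOME p. valid p \<and> \<pi> (pbasis p) = q"
  have "valid ?p \<and> \<pi> (pbasis ?p) = q" by (rule someI[of _ p]) (use assms in \<open>auto simp: b_def\<close>)
  then have "fst ?p = fst p \<and> path_end h ?p = path_end h p"
    using b_ends[of ?p p] assms by (auto simp: b_def)
  then show "src q = fst p" "tgt q = path_end h p"
    by (auto simp: src_def tgt_def cls_src_def cls_tgt_def)
qed

lemma Q_rep: "q \<in> Q \<Longrightarrow> \<exists>p. valid p \<and> q = b p \<and> src q = fst p \<and> tgt q = path_end h p"
  using Q_b Q_nz src_tgt by metis

lemma Q_srcV: "q \<in> Q \<Longrightarrow> src q \<in> V" and Q_tgtV: "q \<in> Q \<Longrightarrow> tgt q \<in> V"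
  using Q_rep valid_fst valid_end[OF hV] by (metis prod.collapse)+

lemma e_Q_left: "q \<in> Q \<Longrightarrow> v \<in> V \<Longrightarrow> e v * q = (if v = src q then q else 0)"
  using Q_rep e_left by metis

lemma e_Q_right: "q \<in> Q \<Longrightarrow> v \<in> V \<Longrightarrow> q * e v = (if tgt q = v then q else 0)"
  using Q_rep e_right by metis

end


context setting begin

definition "L g x = (if x \<in> P then (\<Sum>p\<in>{p. x p \<noteq> 0}. sc (x p) (g p)) else 0)"

lemma L_superset:
  assumes "x \<in> P" "finite S" "{p. x p \<noteq> 0} \<subseteq> S"
  shows "L g x = (\<Sum>p\<in>S. sc (x p) (g p))"
  unfolding L_def using assms by (auto intro: sum.mono_neutral_left)

lemma L_add:
  assumes x: "x \<in> P" and y: "y \<in> P"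
  shows "L g (x + y) = L g x + L g y"
proof -
  let ?S = "{p. x p \<noteq> 0} \<union> {p. y p \<noteq> 0}"
  have fin: "finite ?S" using pa_finite[OF x] pa_finite[OF y] by simp
  have xy: "x + y \<in> P" by (rule pa_add[OF x y])
  have s: "{p. (x + y) p \<noteq> 0} \<subseteq> ?S" by auto
  have "L g (x + y) = (\<Sum>p\<in>?S. sc ((x + y) p) (g p))" by (rule L_superset[OF xy fin s])
  also have "\<dots> = (\<Sum>p\<in>?S. sc (x p) (g p)) + (\<Sum>p\<in>?S. sc (y p) (g p))"
    by (simp add: vs.scale_left_distrib sum.distrib)
  also have "\<dots> = L g x + L g y"
    using L_superset[OF x fin, of g] L_superset[OF y fin, of g] by auto
  finally show ?thesis .
qed

lemma L_scale:
  assumes x: "x \<in> P"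
  shows "L g (pscale c x) = sc c (L g x)"
proof -
  have fin: "finite {p. x p \<noteq> 0}" using pa_finite[OF x] .
  have "L g (pscale c x) = (\<Sum>p\<in>{p. x p \<noteq> 0}. sc (pscale c x p) (g p))"
    by (rule L_superset) (use pa_scale[OF x] fin in \<open>auto simp: pscale_def\<close>)
  also have "\<dots> = sc c (L g x)"
    using x by (simp add: L_def pscale_def vs.scale_sum_right)
  finally show ?thesis .
qed

lemma L_zero[simp]: "L g 0 = 0"
  by (simp add: L_def)

lemma L_sum: "(\<And>i. i \<in> S \<Longrightarrow> f i \<in> P) \<Longrightarrow> L g (sum f S) = (\<Sum>i\<in>S. L g (f i))"
proof (induction S rule: infinite_finite_induct)
  case (insert x F)
  have ih: "L g (sum f F) = (\<Sum>i\<in>F. L g (f i))" by (rule insert(3)) (rule insert(4), simp)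
  have "L g (sum f (insert x F)) = L g (f x + sum f F)" by (simp only: sum.insert[OF insert(1,2)])
  also have "\<dots> = L g (f x) + L g (sum f F)" using insert(4) by (intro L_add) (auto intro: pa_sum)
  also have "\<dots> = L g (f x) + (\<Sum>i\<in>F. L g (f i))" by (simp only: ih)
  also have "\<dots> = (\<Sum>i\<in>insert x F. L g (f i))" by (simp only: sum.insert[OF insert(1,2)])
  finally show ?case .
qed auto

lemma L_basis: "valid p \<Longrightarrow> L g (pbasis p) = g p"
proof -
  assume p: "valid p"
  have "L g (pbasis p) = (\<Sum>q\<in>{p}. sc (pbasis p q) (g q))"
    by (rule L_superset[OF pa_basis[OF p]]) (auto simp: pbasis_def)
  then show ?thesis by (simp add: pbasis_def)
qed

lemma L_pi: "x \<in> P \<Longrightarrow> \<pi> x = L b x"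
  by (simp add: L_def pi_expand)

lemma sc_prod: "sc a u * sc c w = sc (a * c) (u * w)"
  by (simp add: sc_mult_left[symmetric] sc_mult_right[symmetric] mult.commute)

lemma sum_sc_prod: "(\<Sum>p\<in>X. sc (f p) (u p)) * (\<Sum>q\<in>Y. sc (g q) (w q)) = (\<Sum>p\<in>X. \<Sum>q\<in>Y. sc (f p * g q) (u p * w q))"
  by (simp add: sum_product sc_prod)

lemma L_mul:
  assumes base: "\<And>p q. valid p \<Longrightarrow> valid q \<Longrightarrow>
      L g (pmul h (pbasis p) (pbasis q)) = g p * b q + b p * g q"
    and x: "x \<in> P" and y: "y \<in> P"
  shows "L g (pmul h x y) = L g x * \<pi> y + \<pi> x * L g y"
proof -
  let ?X = "{p. x p \<noteq> 0}" and ?Y = "{q. y q \<noteq> 0}"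
  have mem: "\<And>p q. p \<in> ?X \<Longrightarrow> q \<in> ?Y \<Longrightarrow> pscale (x p * y q) (pmul h (pbasis p) (pbasis q)) \<in> P"
    using pa_valid[OF x] pa_valid[OF y] by (auto intro!: pa_scale pa_pmul_basis hV)
  have "L g (pmul h x y) = (\<Sum>p\<in>?X. \<Sum>q\<in>?Y. L g (pscale (x p * y q) (pmul h (pbasis p) (pbasis q))))"
    unfolding pmul_expand[OF x y]
    by (subst L_sum, (rule pa_sum, use mem in blast), rule sum.cong[OF refl], rule L_sum, use mem in blast)
  also have "\<dots> = (\<Sum>p\<in>?X. \<Sum>q\<in>?Y. sc (x p * y q) (g p * b q + b p * g q))"
    using pa_valid[OF x] pa_valid[OF y]
    by (intro sum.cong refl) (simp add: L_scale pa_pmul_basis hV base)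
  also have "\<dots> = (\<Sum>p\<in>?X. sc (x p) (g p)) * (\<Sum>q\<in>?Y. sc (y q) (b q))
                 + (\<Sum>p\<in>?X. sc (x p) (b p)) * (\<Sum>q\<in>?Y. sc (y q) (g q))"
    by (simp add: sum_sc_prod sum.distrib vs.scale_right_distrib)
  also have "\<dots> = L g x * \<pi> y + \<pi> x * L g y"
    using x y by (simp add: L_def pi_expand)
  finally show ?thesis .
qed

abbreviation "diffop D \<equiv> diff_op V E t h sc \<pi> D"

lemma diffop_add: "diffop D \<Longrightarrow> x \<in> P \<Longrightarrow> y \<in> P \<Longrightarrow> D (x + y) = D x + D y"
  and diffop_mul: "diffop D \<Longrightarrow> x \<in> P \<Longrightarrow> y \<in> P \<Longrightarrow> D (pmul h x y) = D x * \<pi> y + \<pi> x * D y"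
  and diffop_scale: "diffop D \<Longrightarrow> x \<in> P \<Longrightarrow> D (pscale c x) = sc c (D x)"
  and diffop_out: "diffop D \<Longrightarrow> x \<notin> P \<Longrightarrow> D x = 0"
  unfolding diff_op_def by blast+

lemma diffop_L:
  assumes "\<And>p q. valid p \<Longrightarrow> valid q \<Longrightarrow>
      L g (pmul h (pbasis p) (pbasis q)) = g p * b q + b p * g q"
  shows "diffop (L g)"
  unfolding diff_op_def
  using L_add L_scale L_mul[OF assms] by (auto simp: L_def)

lemma diffop_zero: "diffop D \<Longrightarrow> D 0 = 0"
  unfolding diff_op_def by (metis add_cancel_right_right pa_zero add_0)

lemma diffop_eq_L:
  assumes "diffop D"
  shows "D = L (\<lambda>p. D (pbasis p))"
proof
  fix x
  show "D x = L (\<lambda>p. D (pbasis p)) x"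
  proof (cases "x \<in> P")
    case False then show ?thesis using assms by (simp add: diff_op_def L_def)
  next
    case True
    have D_sum: "\<And>S f. (\<And>i. i \<in> S \<Longrightarrow> f i \<in> P) \<Longrightarrow> D (sum f S) = (\<Sum>i\<in>S. D (f i))"
    proof -
      fix S :: "'z set" and f
      show "(\<And>i. i \<in> S \<Longrightarrow> f i \<in> P) \<Longrightarrow> D (sum f S) = (\<Sum>i\<in>S. D (f i))"
      proof (induction S rule: infinite_finite_induct)
        case (insert y F)
        have ih: "D (sum f F) = (\<Sum>i\<in>F. D (f i))" by (rule insert(3)) (rule insert(4), simp)
        have "D (sum f (insert y F)) = D (f y + sum f F)" by (simp only: sum.insert[OF insert(1,2)])
        also have "\<dots> = D (f y) + D (sum f F)" using insert(4)
          by (intro diffop_add[OF assms]) (auto intro: pa_sum)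
        also have "\<dots> = D (f y) + (\<Sum>i\<in>F. D (f i))" by (simp only: ih)
        also have "\<dots> = (\<Sum>i\<in>insert y F. D (f i))" by (simp only: sum.insert[OF insert(1,2)])
        finally show ?case .
      qed (use diffop_zero[OF assms] in auto)
    qed
    have "D x = D (\<Sum>p\<in>{p. x p \<noteq> 0}. pscale (x p) (pbasis p))" using pa_expand[OF True] by simp
    also have "\<dots> = (\<Sum>p\<in>{p. x p \<noteq> 0}. D (pscale (x p) (pbasis p)))"
      by (rule D_sum) (use pa_valid[OF True] in \<open>auto intro: pa_scale pa_basis\<close>)
    also have "\<dots> = (\<Sum>p\<in>{p. x p \<noteq> 0}. sc (x p) (D (pbasis p)))"
      using assms pa_valid[OF True] by (intro sum.cong refl) (auto simp: diff_op_def pa_basis)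
    also have "\<dots> = L (\<lambda>p. D (pbasis p)) x" using True by (simp add: L_def)
    finally show ?thesis .
  qed
qed

lemma pbasis_Cons:
  assumes "valid (v, a # es)"
  shows "pbasis (v, a # es) = pmul h (arrow_el t a) (pbasis (h a, es))"
  using assms valid_Cons[OF hV] by (simp add: arrow_el_def pmul_pbasis)

lemma diffop_Cons:
  assumes D: "diffop D" and p: "valid (v, a # es)"
  shows "D (pbasis (v, a # es)) = D (arrow_el t a) * b (h a, es) + \<pi> (arrow_el t a) * D (pbasis (h a, es))"
proof -
  have v1: "valid (t a, [a])" and v2: "valid (h a, es)" using p valid_Cons[OF hV] hV by auto
  show ?thesis unfolding pbasis_Cons[OF p] using diffop_mul[OF D pa_basis[OF v1] pa_basis[OF v2]]
    by (simp add: arrow_el_def b_def)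
qed

lemma diffop_unique:
  assumes D: "diffop D" and D': "diffop D'"
    and vx: "\<And>v. v \<in> V \<Longrightarrow> D (vertex_el v) = D' (vertex_el v)"
    and ar: "\<And>a. a \<in> E \<Longrightarrow> D (arrow_el t a) = D' (arrow_el t a)"
  shows "D = D'"
proof -
  have "D (pbasis (v, es)) = D' (pbasis (v, es))" if "valid (v, es)" for v es
    using that
  proof (induction es arbitrary: v)
    case Nil then show ?case using vx by (simp add: vertex_el_def)
  next
    case (Cons a es)
    have "valid (h a, es)" "a \<in> E" using Cons.prems valid_Cons[OF hV] by auto
    then show ?case using diffop_Cons[OF D Cons.prems] diffop_Cons[OF D' Cons.prems] Cons.IH ar by simp
  qed
  then have "\<forall>p. valid p \<longrightarrow> D (pbasis p) = D' (pbasis p)" by auto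
  then have "L (\<lambda>p. D (pbasis p)) = L (\<lambda>p. D' (pbasis p))"
    unfolding L_def by (intro ext) (auto intro!: sum.cong dest: pa_valid)
  then show ?thesis using diffop_eq_L[OF D] diffop_eq_L[OF D'] by simp
qed

end


lemma path_end_take_Suc: "i < length es \<Longrightarrow> path_end h (v, take (Suc i) es) = h (es ! i)"
  by (simp add: path_end_def take_Suc_conv_app_nth)

context setting begin

lemma valid_pieces:
  assumes p: "valid (v, es)" and i: "i < length es"
  shows "valid (v, take i es)" "valid (h (es ! i), drop (Suc i) es)"
    "path_end h (h (es ! i), drop (Suc i) es) = path_end h (v, es)" "es ! i \<in> E"
proof -
  have sp: "es = take (Suc i) es @ drop (Suc i) es" by simp
  have "valid (v, take (Suc i) es @ drop (Suc i) es)" using p by simp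
  from valid_split[OF hV this] have a: "valid (v, take (Suc i) es)"
    and b: "valid (h (es ! i), drop (Suc i) es)" using path_end_take_Suc[OF i, where h=h and v=v] by auto
  show "valid (h (es ! i), drop (Suc i) es)" by (rule b)
  have "path_end h (v, take (Suc i) es @ drop (Suc i) es) = path_end h (h (es ! i), drop (Suc i) es)"
    using valid_concat[OF hV a b] path_end_take_Suc[OF i, where h=h and v=v] by auto
  then show "path_end h (h (es ! i), drop (Suc i) es) = path_end h (v, es)" by simp
  have "valid (v, take i es @ drop i es)" using p by simp
  from valid_split[OF hV this] show "valid (v, take i es)" by simp
  show "es ! i \<in> E" using p i by (auto simp: valid_path_def)
qed

definition "fr r s p = (\<Sum>i\<in>{i. i < length (snd p) \<and> snd p ! i = r}.
   b (fst p, take i (snd p)) * s * b (h r, drop (Suc i) (snd p)))"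

lemma fr_concat:
  assumes p: "valid (v, es1)" and q: "valid (w, es2)" and pq: "path_end h (v, es1) = w"
  shows "fr r s (v, es1 @ es2) = fr r s (v, es1) * b (w, es2) + b (v, es1) * fr r s (w, es2)"
proof -
  let ?n = "length es1"
  let ?A = "{i. i < ?n \<and> es1 ! i = r}" and ?B = "{j. j < length es2 \<and> es2 ! j = r}"
  have split: "{i. i < length (es1 @ es2) \<and> (es1 @ es2) ! i = r} = ?A \<union> (\<lambda>j. ?n + j) ` ?B"
  proof (rule set_eqI, rule iffI)
    fix i assume "i \<in> {i. i < length (es1 @ es2) \<and> (es1 @ es2) ! i = r}"
    then show "i \<in> ?A \<union> (\<lambda>j. ?n + j) ` ?B"
      by (cases "i < ?n") (auto simp: nth_append image_iff intro!: exI[of _ "i - ?n"])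
  qed (auto simp: nth_append)
  have disj: "?A \<inter> (\<lambda>j. ?n + j) ` ?B = {}" by auto
  have T1: "b (v, take i (es1 @ es2)) * s * b (h r, drop (Suc i) (es1 @ es2))
      = b (v, take i es1) * s * b (h r, drop (Suc i) es1) * b (w, es2)" if "i \<in> ?A" for i
  proof -
    from that have i: "i < ?n" and r: "es1 ! i = r" by auto
    have vv: "valid (h r, drop (Suc i) es1)" and ee: "path_end h (h r, drop (Suc i) es1) = w"
      using valid_pieces[OF p i] r pq by auto
    have "b (h r, drop (Suc i) es1 @ es2) = b (h r, drop (Suc i) es1) * b (w, es2)"
      using b_mul[OF vv q] ee by simp
    then show ?thesis using i by (simp add: mult.assoc)
  qed
  have T2: "b (v, take (?n + j) (es1 @ es2)) * s * b (h r, drop (Suc (?n + j)) (es1 @ es2))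
      = b (v, es1) * (b (w, take j es2) * s * b (h r, drop (Suc j) es2))" if "j \<in> ?B" for j
  proof -
    from that have j: "j < length es2" by auto
    have vv: "valid (w, take j es2)" using valid_pieces(1)[OF q j] .
    have "b (v, es1 @ take j es2) = b (v, es1) * b (w, take j es2)"
      using b_mul[OF p vv] pq by simp
    then show ?thesis by (simp add: mult.assoc)
  qed
  have "fr r s (v, es1 @ es2) = (\<Sum>i\<in>?A. b (v, take i (es1 @ es2)) * s * b (h r, drop (Suc i) (es1 @ es2)))
      + (\<Sum>i\<in>(\<lambda>j. ?n + j) ` ?B. b (v, take i (es1 @ es2)) * s * b (h r, drop (Suc i) (es1 @ es2)))"
    unfolding fr_def snd_conv fst_conv split by (rule sum.union_disjoint) (auto simp: disj)
  also have "\<dots> = (\<Sum>i\<in>?A. b (v, take i es1) * s * b (h r, drop (Suc i) es1) * b (w, es2))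
      + (\<Sum>j\<in>?B. b (v, es1) * (b (w, take j es2) * s * b (h r, drop (Suc j) es2)))"
  proof -
    have S1: "(\<Sum>i\<in>?A. b (v, take i (es1 @ es2)) * s * b (h r, drop (Suc i) (es1 @ es2)))
       = (\<Sum>i\<in>?A. b (v, take i es1) * s * b (h r, drop (Suc i) es1) * b (w, es2))"
      by (rule sum.cong[OF refl]) (rule T1)
    have "(\<Sum>i\<in>(\<lambda>j. ?n + j) ` ?B. b (v, take i (es1 @ es2)) * s * b (h r, drop (Suc i) (es1 @ es2)))
       = (\<Sum>j\<in>?B. b (v, take (?n + j) (es1 @ es2)) * s * b (h r, drop (Suc (?n + j)) (es1 @ es2)))"
      by (rule sum.reindex_cong[where l="\<lambda>j. ?n + j"]) (auto simp: inj_on_def)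
    also have "\<dots> = (\<Sum>j\<in>?B. b (v, es1) * (b (w, take j es2) * s * b (h r, drop (Suc j) es2)))"
      by (rule sum.cong[OF refl]) (rule T2)
    finally show ?thesis using S1 by simp
  qed
  also have "\<dots> = fr r s (v, es1) * b (w, es2) + b (v, es1) * fr r s (w, es2)"
    by (simp add: fr_def sum_distrib_left sum_distrib_right)
  finally show ?thesis .
qed

lemma fr_nonconcat:
  assumes p: "valid (v, es1)" and q: "valid (w, es2)" and pq: "path_end h (v, es1) \<noteq> w"
  shows "fr r s (v, es1) * b (w, es2) = 0" "b (v, es1) * fr r s (w, es2) = 0"
proof -
  have "b (v, take i es1) * s * b (h r, drop (Suc i) es1) * b (w, es2) = 0"
    if "i < length es1" "es1 ! i = r" for i
  proof -
    have vv: "valid (h r, drop (Suc i) es1)" and ee: "path_end h (h r, drop (Suc i) es1) = path_end h (v, es1)"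
      using valid_pieces[OF p that(1)] that(2) by auto
    have "b (h r, drop (Suc i) es1) * b (w, es2) = 0" using b_mul[OF vv q] ee pq by simp
    then show ?thesis by (simp add: mult.assoc)
  qed
  then show "fr r s (v, es1) * b (w, es2) = 0" by (simp add: fr_def sum_distrib_right)
  have "b (v, es1) * (b (w, take j es2) * s * b (h r, drop (Suc j) es2)) = 0"
    if "j < length es2" for j
  proof -
    have vv: "valid (w, take j es2)" using valid_pieces(1)[OF q that] .
    have "b (v, es1) * b (w, take j es2) = 0" using b_mul[OF p vv] pq by simp
    then show ?thesis by (simp add: mult.assoc[symmetric])
  qed
  then show "b (v, es1) * fr r s (w, es2) = 0" by (simp add: fr_def sum_distrib_left)
qed

lemma fr_base:
  assumes p: "valid p" and q: "valid q"
  shows "L (fr r s) (pmul h (pbasis p) (pbasis q)) = fr r s p * b q + b p * fr r s q"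
proof -
  obtain v es1 where pv: "p = (v, es1)" by fastforce
  obtain w es2 where qv: "q = (w, es2)" by fastforce
  show ?thesis
  proof (cases "path_end h p = fst q")
    case True
    have vc: "valid (v, es1 @ es2)" using valid_concat[OF hV] p q True pv qv by auto
    show ?thesis using True pv qv p q
      by (simp add: pmul_pbasis L_basis[OF vc] fr_concat)
  next
    case False
    then show ?thesis using fr_nonconcat[of v es1 w es2 r s] p q pv qv by (simp add: pmul_pbasis)
  qed
qed

lemma diffop_fr: "diffop (L (fr r s))"
  by (rule diffop_L) (rule fr_base)

lemma fr_vertex: "v \<in> V \<Longrightarrow> L (fr r s) (vertex_el v) = 0"
  by (simp add: vertex_el_def L_basis fr_def)

lemma fr_arrow:
  assumes a: "a \<in> E" and r: "r \<in> E" and s: "s \<in> Q" and ts: "t r = src s" and hs: "h r = tgt s"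
  shows "L (fr r s) (arrow_el t a) = (if a = r then s else 0)"
proof -
  have va: "valid (t a, [a])" using a hV tV valid_Cons[OF hV] by auto
  have st: "{i. i < length [a] \<and> [a] ! i = r} = (if a = r then {0} else {})" by auto
  have "fr r s (t a, [a]) = (if a = r then e (t r) * s * e (h r) else 0)"
    unfolding fr_def snd_conv fst_conv st by (auto simp: e_b)
  also have "\<dots> = (if a = r then s else 0)"
  proof -
    have "e (t r) * s = s" using e_Q_left[OF s, of "t r"] ts tV r by auto
    moreover have "s * e (h r) = s" using e_Q_right[OF s, of "h r"] hs hV r by auto
    ultimately show ?thesis by simp
  qed
  finally show ?thesis by (simp add: arrow_el_def L_basis[OF va])
qed

definition "good a y D \<longleftrightarrow> diffop D \<and> D (arrow_el t a) = y \<and>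
   (\<forall>a'\<in>E. a' \<noteq> a \<longrightarrow> D (arrow_el t a') = 0) \<and> (\<forall>v\<in>V. D (vertex_el v) = 0)"

lemma good_unique: "a \<in> E \<Longrightarrow> good a y D \<Longrightarrow> good a y D' \<Longrightarrow> D = D'"
  unfolding good_def by (rule diffop_unique) (auto, metis)

lemma D_op_eq:
  assumes r: "r \<in> E" and s: "s \<in> Q" and ts: "t r = src s" and hs: "h r = tgt s"
  shows "D_op V E t h sc \<pi> r s = L (fr r s)"
proof -
  have g: "good r s (L (fr r s))"
    unfolding good_def using diffop_fr fr_vertex fr_arrow[OF _ r s ts hs] r by auto
  have eq: "(\<lambda>D. diffop D \<and> D (arrow_el t r) = s \<and> (\<forall>a\<in>E. a \<noteq> r \<longrightarrow> D (arrow_el t a) = 0) \<and>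
      (\<forall>v\<in>V. D (vertex_el v) = 0)) = good r s"
    by (rule ext) (simp add: good_def)
  show ?thesis unfolding D_op_def eq
    by (rule the_equality, rule g) (metis good_unique[OF r g])
qed

lemma D_op_good:
  assumes r: "r \<in> E" and s: "s \<in> Q" and ts: "t r = src s" and hs: "h r = tgt s"
  shows "good r s (D_op V E t h sc \<pi> r s)"
  unfolding D_op_eq[OF assms] good_def using diffop_fr fr_vertex fr_arrow[OF _ r s ts hs] r by auto

end


context setting begin

abbreviation fA :: "'k \<Rightarrow> ('a \<Rightarrow> 'a) \<Rightarrow> ('a \<Rightarrow> 'a)" where "fA \<equiv> fun_scale sc"
abbreviation fP :: "'k \<Rightarrow> (((('v,'e) qpath \<Rightarrow> 'k) \<Rightarrow> 'a)) \<Rightarrow> (((('v,'e) qpath \<Rightarrow> 'k) \<Rightarrow> 'a))"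
  where "fP \<equiv> fun_scale sc"

lemma vsA: "vector_space fA" by (rule vs_fun_scale[OF vs])
lemma vsP: "vector_space fP" by (rule vs_fun_scale[OF vs])

sublocale A: vector_space fA by (rule vsA)
sublocale F: vector_space fP by (rule vsP)

abbreviation "D2 \<equiv> frakD2 V E t h sc \<pi> Q"
abbreviation "F2 \<equiv> frakF2 V E t h sc \<pi> Q I"

lemma D2_def': "D2 = F.span {D_op V E t h sc \<pi> r s | r s. r \<in> E \<and> s \<in> Q \<and> t r = src s \<and> h r = tgt s}"
  by (simp add: frakD2_def src_def tgt_def)

lemma diffop_0: "diffop (0 :: (('v,'e) qpath \<Rightarrow> 'k) \<Rightarrow> 'a)"
  unfolding diff_op_def by simp

lemma diffop_plus: "diffop D \<Longrightarrow> diffop D' \<Longrightarrow> diffop (D + D')"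
  unfolding diff_op_def by (simp add: algebra_simps vs.scale_right_distrib)

lemma diffop_fscale: "diffop D \<Longrightarrow> diffop (fP c D)"
  unfolding diff_op_def fun_scale_def
  by (simp add: vs.scale_right_distrib sc_mult_left[symmetric] sc_mult_right[symmetric])

lemma good_0: "good a 0 0"
  unfolding good_def using diffop_0 by simp

lemma good_plus: "good a y D \<Longrightarrow> good a y' D' \<Longrightarrow> good a (y + y') (D + D')"
  unfolding good_def using diffop_plus by simp

lemma good_scale: "good a y D \<Longrightarrow> good a (sc c y) (fP c D)"
  unfolding good_def using diffop_fscale by (simp add: fun_scale_def)

lemma D2_diffop: "D \<in> D2 \<Longrightarrow> diffop D \<and> (\<forall>v\<in>V. D (vertex_el v) = 0)"
  unfolding D2_def'
proof (induction rule: F.span_induct)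
  case (step x)
  then show ?case using D_op_good by (auto simp: good_def)
next
  case base
  let ?C = "Collect (\<lambda>D. diffop D \<and> (\<forall>v\<in>V. D (vertex_el v) = 0))"
  show ?case
  proof (rule F.subspaceI)
    show "0 \<in> ?C" using diffop_0 by simp
  next
    fix x y assume "x \<in> ?C" "y \<in> ?C"
    then show "x + y \<in> ?C" using diffop_plus by simp
  next
    fix c x assume "x \<in> ?C"
    then show "fP c x \<in> ?C" using diffop_fscale by (simp add: fun_scale_def)
  qed
qed

definition "Qa a = {s \<in> Q. t a = src s \<and> h a = tgt s}"

lemma good_span:
  assumes a: "a \<in> E" and y: "y \<in> vs.span (Qa a)"
  shows "\<exists>D\<in>D2. good a y D"
  using y
proof (induction rule: vs.span_induct)
  case (step s)
  then have "D_op V E t h sc \<pi> a s \<in> D2" unfolding D2_def' Qa_def using a by (intro F.span_base) blast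
  then show ?case using D_op_good[of a s] step a by (auto simp: Qa_def)
next
  case base
  show ?case unfolding vs.subspace_def
  proof (intro conjI ballI allI)
    have "0 \<in> D2" unfolding D2_def' by (rule F.span_zero)
    then show "0 \<in> Collect (\<lambda>y. \<exists>D\<in>D2. good a y D)" using good_0 by blast
  next
    fix y y' assume "y \<in> Collect (\<lambda>y. \<exists>D\<in>D2. good a y D)" "y' \<in> Collect (\<lambda>y. \<exists>D\<in>D2. good a y D)"
    then obtain D D' where D: "D \<in> D2" "good a y D" "D' \<in> D2" "good a y' D'" by auto
    have "D + D' \<in> D2" using D(1,3) unfolding D2_def' by (rule F.span_add)
    then show "y + y' \<in> Collect (\<lambda>y. \<exists>D\<in>D2. good a y D)"
      using good_plus[OF D(2,4)] by blast
  next
    fix c y assume "y \<in> Collect (\<lambda>y. \<exists>D\<in>D2. good a y D)"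
    then obtain D where D: "D \<in> D2" "good a y D" by auto
    have "fP c D \<in> D2" using D(1) unfolding D2_def' by (rule F.span_scale)
    then show "sc c y \<in> Collect (\<lambda>y. \<exists>D\<in>D2. good a y D)"
      using good_scale[OF D(2)] by blast
  qed
qed

end


context setting begin

abbreviation "Der \<equiv> derivations sc"
definition "Der0 = {d \<in> Der. \<forall>v\<in>V. d (e v) = 0}"
definition "Psi d = (\<lambda>x. if x \<in> P then d (\<pi> x) else 0)"

lemma der_add: "d \<in> Der \<Longrightarrow> d (x + y) = d x + d y"
  and der_scale: "d \<in> Der \<Longrightarrow> d (sc c x) = sc c (d x)"
  and der_mul: "d \<in> Der \<Longrightarrow> d (x * y) = d x * y + x * d y"
  unfolding derivations_def by (auto simp: Vector_Spaces.linear_iff)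

lemma lin_mul: "Vector_Spaces.linear sc sc (\<lambda>y. c1 * y * c2)"
  by (simp add: Vector_Spaces.linear_iff vs distrib_left distrib_right sc_mult_left[symmetric] sc_mult_right[symmetric])

lemma sandwich_Q:
  assumes "q \<in> Q" "v \<in> V" "w \<in> V"
  shows "e v * q * e w = (if src q = v \<and> tgt q = w then q else 0)"
  using assms by (simp add: e_Q_left e_Q_right)

lemma sandwich_span:
  assumes "v \<in> V" "w \<in> V"
  shows "e v * y * e w \<in> vs.span {q\<in>Q. src q = v \<and> tgt q = w}"
proof -
  have mh: "module_hom sc sc (\<lambda>y. e v * y * e w)" using lin_mul module_hom_iff_linear by blast
  have "e v * y * e w \<in> vs.span ((\<lambda>y. e v * y * e w) ` Q)"
    unfolding module_hom.span_image[OF mh] Q_span by (rule rangeI)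
  moreover have "(\<lambda>y. e v * y * e w) ` Q \<subseteq> insert 0 {q\<in>Q. src q = v \<and> tgt q = w}"
    using sandwich_Q assms by auto
  then have "vs.span ((\<lambda>y. e v * y * e w) ` Q) \<subseteq> vs.span (insert 0 {q\<in>Q. src q = v \<and> tgt q = w})"
    by (rule vs.span_mono)
  ultimately show ?thesis by (simp add: subset_iff)
qed

lemma arrow_b: "a \<in> E \<Longrightarrow> \<pi> (arrow_el t a) = b (t a, [a]) \<and> valid (t a, [a])"
  using hV tV valid_Cons[OF hV] by (auto simp: arrow_el_def b_def)

lemma der0_arrow:
  assumes d: "d \<in> Der0" and a: "a \<in> E"
  shows "d (\<pi> (arrow_el t a)) \<in> vs.span (Qa a)"
proof -
  let ?x = "\<pi> (arrow_el t a)"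
  have dD: "d \<in> Der" and d0: "\<And>v. v \<in> V \<Longrightarrow> d (e v) = 0" using d by (auto simp: Der0_def)
  have ta: "t a \<in> V" and ha: "h a \<in> V" using tV hV a by auto
  have x: "?x = e (t a) * ?x * e (h a)"
    using arrow_b[OF a] e_left e_right ta ha by auto
  have "d ?x = d (e (t a) * ?x * e (h a))" by (rule arg_cong[OF x])
  also have "\<dots> = e (t a) * d ?x * e (h a)"
    using der_mul[OF dD] d0[OF ta] d0[OF ha] by (simp add: mult.assoc)
  finally have "d ?x = e (t a) * d ?x * e (h a)" .
  moreover have "e (t a) * d ?x * e (h a) \<in> vs.span (Qa a)"
    using sandwich_span[OF ta ha] by (simp add: Qa_def eq_commute[of "t a"] eq_commute[of "h a"] conj_commute)
  ultimately show ?thesis by simp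
qed

lemma Psi_diffop: "d \<in> Der \<Longrightarrow> diffop (Psi d)"
  unfolding diff_op_def Psi_def
  by (auto simp: pa_add pa_pmul pa_scale hV pi_add pi_mul pi_scale der_add der_mul der_scale)

lemma diffop_sum: "(\<And>i. i \<in> S \<Longrightarrow> diffop (G i)) \<Longrightarrow> diffop (sum G S)"
proof (induction S rule: infinite_finite_induct)
  case (insert x F)
  then show ?case by (simp only: sum.insert[OF insert(1,2)]) (rule diffop_plus; simp)
qed (simp_all add: diffop_0)

lemma Psi_D2:
  assumes d: "d \<in> Der0"
  shows "Psi d \<in> D2"
proof -
  have dD: "d \<in> Der" and d0: "\<And>v. v \<in> V \<Longrightarrow> d (e v) = 0" using d by (auto simp: Der0_def)
  have "\<forall>a\<in>E. \<exists>D\<in>D2. good a (d (\<pi> (arrow_el t a))) D"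
    using good_span der0_arrow[OF d] by blast
  then obtain G where G: "\<And>a. a \<in> E \<Longrightarrow> G a \<in> D2 \<and> good a (d (\<pi> (arrow_el t a))) (G a)"
    by metis
  let ?S = "sum G E"
  have SD2: "?S \<in> D2" unfolding D2_def' by (rule F.span_sum) (use G D2_def' in auto)
  have dS: "diffop ?S" by (rule diffop_sum) (use G in \<open>auto simp: good_def\<close>)
  have Sv: "?S (vertex_el v) = 0" if "v \<in> V" for v
    unfolding sum_fun_app using G that by (auto simp: good_def intro!: sum.neutral)
  have Sa: "?S (arrow_el t a) = d (\<pi> (arrow_el t a))" if a: "a \<in> E" for a
  proof -
    have "?S (arrow_el t a) = (\<Sum>a'\<in>E. G a' (arrow_el t a))" by (rule sum_fun_app)
    also have "\<dots> = G a (arrow_el t a) + (\<Sum>a'\<in>E - {a}. G a' (arrow_el t a))"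
      by (rule sum.remove[OF finE a])
    also have "(\<Sum>a'\<in>E - {a}. G a' (arrow_el t a)) = 0"
    proof (rule sum.neutral, rule ballI)
      fix x assume "x \<in> E - {a}"
      then show "G x (arrow_el t a) = 0" using G[of x] a by (auto simp: good_def)
    qed
    also have "G a (arrow_el t a) + 0 = d (\<pi> (arrow_el t a))" using G[OF a] by (simp add: good_def)
    finally show ?thesis .
  qed
  have "Psi d = ?S"
  proof (rule diffop_unique[OF Psi_diffop[OF dD] dS])
    fix v assume v: "v \<in> V"
    have "(vertex_el v :: ('v,'e) qpath \<Rightarrow> 'k) \<in> P" by (simp add: vertex_el_def pa_basis v)
    then show "Psi d (vertex_el v) = ?S (vertex_el v)" using Sv[OF v] d0[OF v] by (simp add: Psi_def e_def)
  next
    fix a assume a: "a \<in> E"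
    have "(arrow_el t a :: ('v,'e) qpath \<Rightarrow> 'k) \<in> P" using arrow_b[OF a] by (simp add: arrow_el_def pa_basis)
    then show "Psi d (arrow_el t a) = ?S (arrow_el t a)" using Sa[OF a] by (simp add: Psi_def)
  qed
  then show ?thesis using SD2 by simp
qed

end


context setting begin

lemma der_zero: "d \<in> Der \<Longrightarrow> d 0 = 0"
  using der_add[of d 0 0] by simp

lemma Psi_F2: "d \<in> Der0 \<Longrightarrow> Psi d \<in> F2"
  unfolding frakF2_def using Psi_D2 ker der_zero by (auto simp: Psi_def Der0_def)

lemma F2_Psi:
  assumes F: "F \<in> F2"
  shows "F \<in> Psi ` Der0"
proof -
  have FD2: "F \<in> D2" and FI: "\<And>x. x \<in> I \<Longrightarrow> F x = 0" using F by (auto simp: frakF2_def)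
  have dF: "diffop F" and Fv: "\<And>v. v \<in> V \<Longrightarrow> F (vertex_el v) = 0" using D2_diffop[OF FD2] by auto
  have wd: "F x = F x'" if "x \<in> P" "x' \<in> P" "\<pi> x = \<pi> x'" for x x'
  proof -
    have d: "x - x' \<in> P" by (rule pa_diff[OF that(1,2)])
    have sx: "x = x' + (x - x')" by simp
    have "\<pi> x = \<pi> x' + \<pi> (x - x')" using pi_add[OF that(2) d] sx by metis
    then have "\<pi> (x - x') = 0" using that(3) by simp
    then have "x - x' \<in> I" using ker d by blast
    then have "F (x - x') = 0" by (rule FI)
    moreover have "F x = F x' + F (x - x')" using diffop_add[OF dF that(2) d] sx by metis
    ultimately show ?thesis by simp
  qed
  define rep where "rep y = (SOME x. x \<in> P \<and> \<pi> x = y)" for y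
  have rep: "rep y \<in> P \<and> \<pi> (rep y) = y" for y
    unfolding rep_def by (rule someI_ex[of "\<lambda>x. x \<in> P \<and> \<pi> x = y"]) (use pi_surj in blast)
  define d where "d y = F (rep y)" for y
  have dpi: "d (\<pi> x) = F x" if "x \<in> P" for x
    unfolding d_def using wd[of "rep (\<pi> x)" x] rep that by auto
  have dD: "d \<in> Der"
    unfolding derivations_def Vector_Spaces.linear_iff
  proof (intro CollectI conjI allI vs)
    fix y1 y2
    obtain x1 x2 where x: "x1 \<in> P" "\<pi> x1 = y1" "x2 \<in> P" "\<pi> x2 = y2" using rep by metis
    show "d (y1 + y2) = d y1 + d y2"
      using dpi[of "x1 + x2"] dpi[of x1] dpi[of x2] pi_add[of x1 x2] x pa_add diffop_add[OF dF] by metis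
    show "d (y1 * y2) = d y1 * y2 + y1 * d y2"
      using dpi[of "pmul h x1 x2"] dpi[of x1] dpi[of x2] pi_mul[of x1 x2] x pa_pmul[OF hV] diffop_mul[OF dF] by metis
  next
    fix c y
    obtain x where x: "x \<in> P" "\<pi> x = y" using rep by metis
    show "d (sc c y) = sc c (d y)"
      using dpi[of "pscale c x"] dpi[of x] pi_scale[of x c] x pa_scale diffop_scale[OF dF] by metis
  qed
  have "d \<in> Der0" unfolding Der0_def using dD dpi Fv
    by (auto simp: e_def vertex_el_def pa_basis)
  moreover have "Psi d = F"
  proof
    fix x show "Psi d x = F x"
      by (cases "x \<in> P") (auto simp: Psi_def dpi diffop_out[OF dF])
  qed
  ultimately show ?thesis by blast
qed

lemma Psi_image: "Psi ` Der0 = F2"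
  using Psi_F2 F2_Psi by blast

lemma Psi_linear: "Vector_Spaces.linear fA fP Psi"
  unfolding Vector_Spaces.linear_iff using vsA vsP by (auto simp: Psi_def fun_scale_def fun_eq_iff)

lemma Psi_inj: "d \<in> Der0 \<Longrightarrow> Psi d = 0 \<Longrightarrow> d = 0"
proof
  fix y assume "Psi d = 0"
  obtain x where x: "x \<in> P" "\<pi> x = y" using pi_surj by blast
  have "Psi d x = 0" using \<open>Psi d = 0\<close> by simp
  then show "d y = 0 y" using x by (simp add: Psi_def)
qed

end


context setting begin

definition ad :: "'a \<Rightarrow> 'a \<Rightarrow> 'a" where "ad a = (\<lambda>x. a * x - x * a)"

lemma Inn_eq: "inner_derivations = range ad"
  by (auto simp: inner_derivations_def ad_def)

lemma der_lin: "d \<in> Der \<Longrightarrow> module_hom sc sc d"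
  unfolding derivations_def using module_hom_iff_linear by blast

lemma ad_der: "ad a \<in> Der"
  unfolding derivations_def Vector_Spaces.linear_iff
  by (auto simp: ad_def vs algebra_simps vs.scale_right_diff_distrib sc_mult_left[symmetric] sc_mult_right[symmetric])

lemma ad_add: "ad (a1 + a2) = ad a1 + ad a2"
  by (auto simp: ad_def fun_eq_iff algebra_simps)

lemma ad_scale: "ad (sc c a) = fA c (ad a)"
  by (auto simp: ad_def fun_eq_iff fun_scale_def vs.scale_right_diff_distrib sc_mult_left[symmetric] sc_mult_right[symmetric])

lemma ad_zero: "ad 0 = 0"
  by (auto simp: ad_def fun_eq_iff)

lemma ad_linear: "Vector_Spaces.linear sc fA ad"
  unfolding Vector_Spaces.linear_iff using vs vsA by (simp add: ad_add ad_scale)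

lemma Der_subspace: "A.subspace Der"
proof (rule A.subspaceI)
  show "0 \<in> Der" unfolding derivations_def Vector_Spaces.linear_iff by (simp add: vs)
next
  fix d d' assume "d \<in> Der" "d' \<in> Der"
  then show "d + d' \<in> Der" unfolding derivations_def Vector_Spaces.linear_iff
    by (simp add: algebra_simps vs.scale_right_distrib)
next
  fix c d assume "d \<in> Der"
  then show "fA c d \<in> Der" unfolding derivations_def Vector_Spaces.linear_iff
    by (simp add: fun_scale_def vs.scale_right_distrib sc_mult_left[symmetric] sc_mult_right[symmetric] mult.commute)
qed

lemma Der0_subspace: "A.subspace Der0"
proof (rule A.subspaceI)
  show "0 \<in> Der0" using A.subspace_0[OF Der_subspace] by (simp add: Der0_def)
next
  fix d d' assume "d \<in> Der0" "d' \<in> Der0"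
  then show "d + d' \<in> Der0" using A.subspace_add[OF Der_subspace] by (simp add: Der0_def)
next
  fix c d assume "d \<in> Der0"
  then show "fA c d \<in> Der0" using A.subspace_scale[OF Der_subspace] by (simp add: Der0_def fun_scale_def)
qed

lemma Inn_subspace: "A.subspace inner_derivations"
  unfolding Inn_eq
proof (rule A.subspaceI)
  have "0 = ad 0" using ad_zero by simp
  then show "0 \<in> range ad" by blast
next
  fix x y assume "x \<in> range ad" "y \<in> range ad"
  then obtain a1 a2 where "x = ad a1" "y = ad a2" by blast
  then have "x + y = ad (a1 + a2)" by (simp add: ad_add)
  then show "x + y \<in> range ad" by blast
next
  fix c x assume "x \<in> range ad"
  then obtain a1 where "x = ad a1" by blast
  then have "fA c x = ad (sc c a1)" by (simp add: ad_scale)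
  then show "fA c x \<in> range ad" by blast
qed

lemma Inn_Der: "inner_derivations \<subseteq> Der"
  unfolding Inn_eq using ad_der by blast

definition rep :: "'a \<Rightarrow> 'a \<Rightarrow> 'k" where "rep x q = vs.representation Q x q"
definition "B0 = (\<lambda>(q, q'). (\<lambda>x. sc (rep x q) q')) ` (Q \<times> Q)"

lemma rep_sum: "x = (\<Sum>q\<in>Q. sc (rep x q) q)"
  unfolding rep_def using vs.sum_representation_eq[OF Q_indep _ Q_finite] Q_span by auto

lemma Der_fin: "Der \<subseteq> A.span B0"
proof
  fix d assume d: "d \<in> Der"
  interpret m: module_hom sc sc d by (rule der_lin[OF d])
  have "d = (\<Sum>(q, q')\<in>Q \<times> Q. fA (rep (d q) q') (\<lambda>x. sc (rep x q) q'))"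
  proof
    fix x
    have "d x = d (\<Sum>q\<in>Q. sc (rep x q) q)" using rep_sum[of x] by (rule arg_cong)
    also have "\<dots> = (\<Sum>q\<in>Q. sc (rep x q) (d q))" by (simp add: m.sum m.scale)
    also have "\<dots> = (\<Sum>q\<in>Q. sc (rep x q) (\<Sum>q'\<in>Q. sc (rep (d q) q') q'))"
      by (rule sum.cong[OF refl]) (rule arg_cong[OF rep_sum])
    also have "\<dots> = (\<Sum>q\<in>Q. \<Sum>q'\<in>Q. sc (rep (d q) q') (sc (rep x q) q'))"
      by (simp add: vs.scale_sum_right mult.commute)
    also have "\<dots> = (\<Sum>(q, q')\<in>Q \<times> Q. sc (rep (d q) q') (sc (rep x q) q'))"
      by (rule sum.cartesian_product)
    also have "\<dots> = (\<Sum>(q, q')\<in>Q \<times> Q. fA (rep (d q) q') (\<lambda>x. sc (rep x q) q')) x"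
      unfolding sum_fun_app by (rule sum.cong[OF refl]) (auto simp: fun_scale_def)
    finally show "d x = (\<Sum>(q, q')\<in>Q \<times> Q. fA (rep (d q) q') (\<lambda>x. sc (rep x q) q')) x" .
  qed
  also have "\<dots> \<in> A.span B0"
  proof (rule A.span_sum)
    fix z assume "z \<in> Q \<times> Q"
    then obtain q q' where z: "z = (q, q')" "q \<in> Q" "q' \<in> Q" by blast
    have "(\<lambda>x. sc (rep x q) q') \<in> B0" using z by (auto simp: B0_def)
    then have "fA (rep (d q) q') (\<lambda>x. sc (rep x q) q') \<in> A.span B0" by (intro A.span_scale A.span_base)
    then show "(case z of (q, q') \<Rightarrow> fA (rep (d q) q') (\<lambda>x. sc (rep x q) q')) \<in> A.span B0" using z by simp
  qed
  finally show "d \<in> A.span B0" .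
qed

lemma B0_finite: "finite B0"
  unfolding B0_def using Q_finite by simp

end


context setting begin

definition u :: "('a \<Rightarrow> 'a) \<Rightarrow> 'a" where "u d = (\<Sum>v\<in>V. d (e v) * e v)"
definition qm :: "('a \<Rightarrow> 'a) \<Rightarrow> ('a \<Rightarrow> 'a)" where "qm d = d - ad (u d)"

lemma ede_zero:
  assumes d: "d \<in> Der" and w: "w \<in> V"
  shows "e w * d (e w) * e w = 0"
proof -
  have ee: "e w * e w = e w" using e_e[OF w w] by simp
  have ee2: "\<And>x. e w * (e w * x) = e w * x" by (simp add: mult.assoc[symmetric] ee)
  have h1: "d (e w) = d (e w) * e w + e w * d (e w)" using der_mul[OF d, of "e w" "e w"] ee by simp
  have h2: "e w * d (e w) * e w = e w * (d (e w) * e w + e w * d (e w)) * e w"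
    using arg_cong[OF h1, of "\<lambda>z. e w * z * e w"] by (simp only:)
  have h3: "e w * (d (e w) * e w + e w * d (e w)) * e w = e w * d (e w) * e w + e w * d (e w) * e w"
    by (simp add: distrib_left distrib_right mult.assoc ee ee2)
  from h2 h3 have "e w * d (e w) * e w = e w * d (e w) * e w + e w * d (e w) * e w" by simp
  then show ?thesis by simp
qed

lemma ad_u:
  assumes d: "d \<in> Der" and w: "w \<in> V"
  shows "ad (u d) (e w) = d (e w)"
proof -
  have A: "u d * e w = d (e w) * e w"
  proof -
    have "u d * e w = (\<Sum>v\<in>V. d (e v) * (e v * e w))" by (simp add: u_def sum_distrib_right mult.assoc)
    also have "\<dots> = (\<Sum>v\<in>V. if v = w then d (e w) * e w else 0)"
      by (rule sum.cong[OF refl]) (simp add: e_e w)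
    also have "\<dots> = d (e w) * e w" using finV w by simp
    finally show ?thesis .
  qed
  have tm: "e w * d (e v) * e v = - (d (e w) * e v) + (if v = w then d (e w) * e w else 0)"
    if v: "v \<in> V" for v
  proof (cases "v = w")
    case True then show ?thesis using ede_zero[OF d w] by simp
  next
    case False
    have "0 = d (e w * e v)" using e_e[OF w v] False der_zero[OF d] by simp
    also have "\<dots> = d (e w) * e v + e w * d (e v)" by (rule der_mul[OF d])
    finally have "e w * d (e v) = - (d (e w) * e v)" by (simp add: eq_neg_iff_add_eq_0 add.commute)
    then have "e w * d (e v) * e v = - (d (e w) * (e v * e v))" by (simp add: mult.assoc)
    then show ?thesis using False e_e[OF v v] by simp
  qed
  have B: "e w * u d = - d (e w) + d (e w) * e w"
  proof -
    have "e w * u d = (\<Sum>v\<in>V. e w * d (e v) * e v)" by (simp add: u_def sum_distrib_left mult.assoc)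
    also have "\<dots> = (\<Sum>v\<in>V. - (d (e w) * e v) + (if v = w then d (e w) * e w else 0))"
      by (rule sum.cong[OF refl]) (rule tm)
    also have "\<dots> = - (d (e w) * one) + d (e w) * e w"
      using finV w by (simp add: sum.distrib sum_negf one_def sum_distrib_left sum_subtractf)
    finally show ?thesis by simp
  qed
  show ?thesis unfolding ad_def using A B by simp
qed

lemma u_linear_add: "u (d + d') = u d + u d'"
  by (simp add: u_def sum.distrib distrib_right)

lemma u_linear_scale: "u (fA c d) = sc c (u d)"
  by (simp add: u_def fun_scale_def vs.scale_sum_right sc_mult_left)

lemma qm_linear: "Vector_Spaces.linear fA fA qm"
  unfolding Vector_Spaces.linear_iff
proof (intro conjI allI vsA)
  fix d d' :: "'a \<Rightarrow> 'a"
  show "qm (d + d') = qm d + qm d'"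
    unfolding qm_def u_linear_add ad_add by (simp add: algebra_simps)
next
  fix c and d :: "'a \<Rightarrow> 'a"
  show "qm (fA c d) = fA c (qm d)"
    unfolding qm_def u_linear_scale ad_scale
    by (simp add: fun_scale_def fun_eq_iff vs.scale_right_diff_distrib)
qed

lemma qm_Der0: "d \<in> Der \<Longrightarrow> qm d \<in> Der0"
  unfolding Der0_def qm_def
  using A.subspace_diff[OF Der_subspace _ ad_der] ad_u by simp

lemma u_Der0: "d \<in> Der0 \<Longrightarrow> u d = 0"
  by (simp add: u_def Der0_def)

lemma qm_id: "d \<in> Der0 \<Longrightarrow> qm d = d"
  by (simp add: qm_def u_Der0 ad_zero)

lemma qm_Der: "qm ` Der = Der0"
proof
  show "qm ` Der \<subseteq> Der0" using qm_Der0 by blast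
  show "Der0 \<subseteq> qm ` Der"
  proof
    fix d assume "d \<in> Der0"
    then have "d \<in> Der" "qm d = d" by (auto simp: Der0_def qm_id)
    then show "d \<in> qm ` Der" by (metis imageI)
  qed
qed

lemma qm_Inn: "qm ` inner_derivations = inner_derivations \<inter> Der0"
proof
  show "qm ` inner_derivations \<subseteq> inner_derivations \<inter> Der0"
  proof
    fix x assume "x \<in> qm ` inner_derivations"
    then obtain a where x: "x = qm (ad a)" unfolding Inn_eq by blast
    have "x = ad (a - u (ad a))" unfolding x qm_def by (auto simp: ad_def fun_eq_iff algebra_simps)
    then have "x \<in> inner_derivations" unfolding Inn_eq by blast
    moreover have "x \<in> Der0" unfolding x by (rule qm_Der0[OF ad_der])
    ultimately show "x \<in> inner_derivations \<inter> Der0" by blast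
  qed
  show "inner_derivations \<inter> Der0 \<subseteq> qm ` inner_derivations"
  proof
    fix d assume "d \<in> inner_derivations \<inter> Der0"
    then have "d \<in> inner_derivations" "qm d = d" by (auto simp: qm_id)
    then show "d \<in> qm ` inner_derivations" by (metis imageI)
  qed
qed

lemma qm_ker: "{d \<in> Der. qm d = 0} = {d \<in> inner_derivations. qm d = 0}"
proof
  show "{d \<in> Der. qm d = 0} \<subseteq> {d \<in> inner_derivations. qm d = 0}"
  proof
    fix d assume "d \<in> {d \<in> Der. qm d = 0}"
    then have "qm d = 0" by simp
    then have "d = ad (u d)" unfolding qm_def by (simp add: fun_eq_iff)
    then show "d \<in> {d \<in> inner_derivations. qm d = 0}" using \<open>qm d = 0\<close> unfolding Inn_eq by blast
  qed
  show "{d \<in> inner_derivations. qm d = 0} \<subseteq> {d \<in> Der. qm d = 0}" using Inn_Der by blast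
qed

end


context setting begin

definition Cp :: "'a set" where "Cp = {a. \<forall>v\<in>V. a * e v = e v * a}"

lemma Cp_subspace: "vs.subspace Cp"
proof (rule vs.subspaceI)
  show "0 \<in> Cp" by (simp add: Cp_def)
next
  fix x y assume "x \<in> Cp" "y \<in> Cp"
  then show "x + y \<in> Cp" by (simp add: Cp_def distrib_left distrib_right)
next
  fix c x assume "x \<in> Cp"
  then show "sc c x \<in> Cp" by (simp add: Cp_def sc_mult_left[symmetric] sc_mult_right[symmetric])
qed

lemma ad_Cp: "ad ` Cp = inner_derivations \<inter> Der0"
proof
  show "ad ` Cp \<subseteq> inner_derivations \<inter> Der0"
    using ad_der by (auto simp: Cp_def Der0_def Inn_eq ad_def)
  show "inner_derivations \<inter> Der0 \<subseteq> ad ` Cp"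
  proof
    fix d assume "d \<in> inner_derivations \<inter> Der0"
    then obtain a where d: "d = ad a" "\<forall>v\<in>V. ad a (e v) = 0" unfolding Inn_eq Der0_def by blast
    then have "a \<in> Cp" by (auto simp: Cp_def ad_def)
    then show "d \<in> ad ` Cp" using d by blast
  qed
qed

lemma ad_ker: "{a \<in> Cp. ad a = 0} = centre"
proof
  show "{a \<in> Cp. ad a = 0} \<subseteq> centre"
    by (auto simp: centre_def ad_def fun_eq_iff)
  show "centre \<subseteq> {a \<in> Cp. ad a = 0}"
    by (auto simp: centre_def ad_def fun_eq_iff Cp_def)
qed

lemma QC_eq: "Q_C V E t h \<pi> Q = {q \<in> Q. src q = tgt q}"
  by (simp add: Q_C_def src_def tgt_def)

lemma QC_Cp: "{q \<in> Q. src q = tgt q} \<subseteq> Cp"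
  by (auto simp: Cp_def e_Q_left e_Q_right)

lemma Cp_decomp:
  assumes a: "a \<in> Cp"
  shows "a = (\<Sum>v\<in>V. e v * a * e v)"
proof -
  have "a = one * a * one" by simp
  also have "\<dots> = (\<Sum>v\<in>V. e v * a * one)"
    by (simp only: one_def sum_distrib_right)
  also have "\<dots> = (\<Sum>v\<in>V. \<Sum>w\<in>V. e v * a * e w)"
    by (simp only: one_def sum_distrib_left)
  also have "\<dots> = (\<Sum>v\<in>V. \<Sum>w\<in>V. if w = v then e v * a * e v else 0)"
  proof (intro sum.cong refl)
    fix v w assume v: "v \<in> V" and w: "w \<in> V"
    have "e v * a * e w = e v * e w * a" using a w by (simp add: Cp_def mult.assoc)
    then show "e v * a * e w = (if w = v then e v * a * e v else 0)" using e_e[OF v w] by auto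
  qed
  also have "\<dots> = (\<Sum>v\<in>V. e v * a * e v)" using finV by simp
  finally show ?thesis .
qed

lemma Cp_span: "Cp \<subseteq> vs.span {q \<in> Q. src q = tgt q}"
proof
  fix a assume a: "a \<in> Cp"
  have "(\<Sum>v\<in>V. e v * a * e v) \<in> vs.span {q \<in> Q. src q = tgt q}"
  proof (rule vs.span_sum)
    fix v assume v: "v \<in> V"
    have "e v * a * e v \<in> vs.span {q\<in>Q. src q = v \<and> tgt q = v}" by (rule sandwich_span[OF v v])
    moreover have "vs.span {q\<in>Q. src q = v \<and> tgt q = v} \<subseteq> vs.span {q \<in> Q. src q = tgt q}"
      by (rule vs.span_mono) auto
    ultimately show "e v * a * e v \<in> vs.span {q \<in> Q. src q = tgt q}" by blast
  qed
  then show "a \<in> vs.span {q \<in> Q. src q = tgt q}" using Cp_decomp[OF a] by simp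
qed

lemma dim_Cp: "vs.dim Cp = card (Q_C V E t h \<pi> Q)"
  unfolding QC_eq
  by (rule vs.basis_card_eq_dim[symmetric]) (use QC_Cp Cp_span vs.independent_mono[OF Q_indep] in auto)

lemma dim_zero: "A.dim {0} = 0"
proof -
  have "A.dim {0} = card ({} :: ('a \<Rightarrow> 'a) set)"
    by (rule A.dim_eq_card) (use A.independent_empty in auto)
  then show ?thesis by simp
qed

theorem main:
  "dim_HH1 sc =
     int (vector_space.dim (fun_scale sc) (frakF2 V E t h sc \<pi> Q I))
   + int (vector_space.dim sc (centre :: 'a set))
   - int (card (Q_C V E t h \<pi> Q))"
proof -
  let ?K = "{d \<in> Der. qm d = 0}"
  have r1: "A.dim Der = A.dim Der0 + A.dim ?K"
    using rank_nullity[OF qm_linear Der_subspace B0_finite Der_fin] qm_Der by simp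
  have r2: "A.dim inner_derivations = A.dim (inner_derivations \<inter> Der0) + A.dim ?K"
    using rank_nullity[OF qm_linear Inn_subspace B0_finite order_trans[OF Inn_Der Der_fin]] qm_Inn qm_ker
    by simp
  have Der0_sub: "Der0 \<subseteq> A.span B0" using Der_fin by (auto simp: Der0_def)
  have ker0: "{d \<in> Der0. Psi d = 0} = {0}"
    using Psi_inj A.subspace_0[OF Der0_subspace] by (auto simp: Psi_def)
  have r3: "A.dim Der0 = F.dim F2"
    using rank_nullity[OF Psi_linear Der0_subspace B0_finite Der0_sub] Psi_image ker0 dim_zero by simp
  have r4: "vs.dim Cp = A.dim (inner_derivations \<inter> Der0) + vs.dim (centre :: 'a set)"
    using rank_nullity[OF ad_linear Cp_subspace Q_finite] Q_span ad_Cp ad_ker by simp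
  show ?thesis
    unfolding dim_HH1_def using r1 r2 r3 r4 dim_Cp by simp
qed

end

theorem proposition4p3:
  fixes V :: "'v set" and E :: "'e set" and t h :: "'e \<Rightarrow> 'v"
    and I :: "(('v,'e) qpath \<Rightarrow> 'k::field) set"
    and sc :: "'k \<Rightarrow> 'a::ring \<Rightarrow> 'a" and \<pi> :: "(('v,'e) qpath \<Rightarrow> 'k) \<Rightarrow> 'a"
    and Q :: "'a set"
  assumes "finite_quiver V E t h"
    and "connected_quiver V E t h"
    and "is_ideal V E t h I"
    and "I \<subseteq> arrow_ideal_sq V E t h"
    and "quotient_map V E t h I sc \<pi>"
    and "\<exists>B. finite B \<and> module.span sc B = UNIV"
    and "path_basis V E t h sc \<pi> Q"
  shows "dim_HH1 sc =
           int (vector_space.dim (fun_scale sc) (frakF2 V E t h sc \<pi> Q I))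
         + int (vector_space.dim sc (centre :: 'a set))
         - int (card (Q_C V E t h \<pi> Q))"
proof -
  interpret setting V E t h I sc \<pi> Q
    using assms by (unfold_locales) auto
  show ?thesis by (rule main)
qed


end
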